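(* Let $(M,\eta,\xi,\phi,g)$ be a non-K-contact contact metric manifold satisfying the weak $(\kappa,\mu)$ condition $R(X,\xi)\xi=\kappa(X-\eta(X)\xi)+\mu hX$ for real constants $\kappa,\mu$ (so $\kappa<1$). Let $\tilde\phi=\frac{1}{\sqrt{1-\kappa}}h$ and $\tilde h=\frac12L_\xi\tilde\phi=\frac{1}{2\sqrt{1-\kappa}}L_\xi h$. Then $$\tilde h=\frac{1}{2\sqrt{1-\kappa}}\big((2-\mu)\phi h+2(1-\kappa)\phi\big),\qquad \tilde h^2=\Big((1-\kappa)-\big(1-\tfrac{\mu}{2}\big)^2\Big)\phi^2 .$$
   Context: A contact metric structure $(M,\eta,\xi,\phi,g)$ consists of a contact form $\eta$, its Reeb field $\xi$, a Riemannian metric $g$ and an endomorphism field $\phi$ with $\eta(\xi)=1$, $\phi^2=-\mathrm{Id}+\eta\otimes\xi$, $\phi\xi=0$, $d\eta=2g(\cdot,\phi\cdot)$. $h=\frac12L_\xi\phi$ ($L_\xi$ the Lie derivative along $\xi$); K-contact means $h=0$. $R(X,Y)=[\nabla_X,\nabla_Y]-\nabla_{[X,Y]}$ for the Levi-Civita connection of $g$. *)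

theory Defs
  imports "HOL-Analysis.Analysis"
begin

text \<open>Local (coordinate) model of a Riemannian / contact metric manifold:
  an open set U of a finite-dimensional real Euclidean space 'a.
  Vector fields are maps 'a => 'a, (1,1)-tensor fields are maps p => (endomorphism of 'a),
  1-forms are maps p => ('a => real), the metric is p => bilinear form.\<close>

primrec Ck_on :: "nat \<Rightarrow> 'a::euclidean_space set \<Rightarrow> ('a \<Rightarrow> 'b::real_normed_vector) \<Rightarrow> bool" where
  "Ck_on 0 U f = continuous_on U f"
| "Ck_on (Suc k) U f = (f differentiable_on U \<and>
       (\<forall>v. Ck_on k U (\<lambda>p. frechet_derivative f (at p) v)))"

definition smooth_on :: "'a::euclidean_space set \<Rightarrow> ('a \<Rightarrow> 'b::real_normed_vector) \<Rightarrow> bool" where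
  "smooth_on U f \<longleftrightarrow> (\<forall>k. Ck_on k U f)"

definition dir_deriv :: "('a::euclidean_space \<Rightarrow> 'a) \<Rightarrow> ('a \<Rightarrow> 'b::real_normed_vector) \<Rightarrow> 'a \<Rightarrow> 'b" where
  "dir_deriv X f p = frechet_derivative f (at p) (X p)"

definition lie_bracket :: "('a::euclidean_space \<Rightarrow> 'a) \<Rightarrow> ('a \<Rightarrow> 'a) \<Rightarrow> 'a \<Rightarrow> 'a" where
  "lie_bracket X Y p = dir_deriv X Y p - dir_deriv Y X p"

text \<open>Christoffel symbols of the Levi-Civita connection of g (Koszul formula):
  Gamma p u v is the unique w with g_p(w,z) = 1/2 (u g(v,z) + v g(u,z) - z g(u,v)) for all z.\<close>
definition christoffel :: "('a::euclidean_space \<Rightarrow> 'a \<Rightarrow> 'a \<Rightarrow> real) \<Rightarrow> 'a \<Rightarrow> 'a \<Rightarrow> 'a \<Rightarrow> 'a" where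
  "christoffel g p u v = (THE w. \<forall>z. g p w z =
      (frechet_derivative (\<lambda>q. g q v z) (at p) u
     + frechet_derivative (\<lambda>q. g q u z) (at p) v
     - frechet_derivative (\<lambda>q. g q u v) (at p) z) / 2)"

definition levi_civita :: "('a::euclidean_space \<Rightarrow> 'a \<Rightarrow> 'a \<Rightarrow> real) \<Rightarrow> ('a \<Rightarrow> 'a) \<Rightarrow> ('a \<Rightarrow> 'a) \<Rightarrow> 'a \<Rightarrow> 'a" where
  "levi_civita g X Y p = dir_deriv X Y p + christoffel g p (X p) (Y p)"

definition curvature :: "('a::euclidean_space \<Rightarrow> 'a \<Rightarrow> 'a \<Rightarrow> real) \<Rightarrow> ('a \<Rightarrow> 'a) \<Rightarrow> ('a \<Rightarrow> 'a) \<Rightarrow> ('a \<Rightarrow> 'a) \<Rightarrow> 'a \<Rightarrow> 'a" where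
  "curvature g X Y Z p = levi_civita g X (levi_civita g Y Z) p
     - levi_civita g Y (levi_civita g X Z) p
     - levi_civita g (lie_bracket X Y) Z p"

text \<open>Lie derivative of a (1,1)-tensor field T along the vector field xi, evaluated at p on v:
  (L_xi T)(V) = [xi, T V] - T [xi, V] for the constant field V = v.\<close>
definition lie_deriv_endo :: "('a::euclidean_space \<Rightarrow> 'a) \<Rightarrow> ('a \<Rightarrow> 'a \<Rightarrow> 'a) \<Rightarrow> 'a \<Rightarrow> 'a \<Rightarrow> 'a" where
  "lie_deriv_endo xi T p v = lie_bracket xi (\<lambda>q. T q v) p - T p (lie_bracket xi (\<lambda>q. v) p)"

text \<open>Exterior derivative of a 1-form, convention d eta(X,Y) = X eta(Y) - Y eta(X) - eta([X,Y]),
  evaluated on constant fields.\<close>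
definition ext_deriv1 :: "('a::euclidean_space \<Rightarrow> 'a \<Rightarrow> real) \<Rightarrow> 'a \<Rightarrow> 'a \<Rightarrow> 'a \<Rightarrow> real" where
  "ext_deriv1 eta p v w = frechet_derivative (\<lambda>q. eta q w) (at p) v
                        - frechet_derivative (\<lambda>q. eta q v) (at p) w"

definition contact_metric_on ::
  "'a::euclidean_space set \<Rightarrow> ('a \<Rightarrow> 'a \<Rightarrow> real) \<Rightarrow> ('a \<Rightarrow> 'a) \<Rightarrow> ('a \<Rightarrow> 'a \<Rightarrow> 'a) \<Rightarrow> ('a \<Rightarrow> 'a \<Rightarrow> 'a \<Rightarrow> real) \<Rightarrow> bool" where
  "contact_metric_on U eta xi phi g \<longleftrightarrow>
     open U \<and>
     smooth_on U xi \<and>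
     (\<forall>v. smooth_on U (\<lambda>p. eta p v)) \<and>
     (\<forall>v. smooth_on U (\<lambda>p. phi p v)) \<and>
     (\<forall>v w. smooth_on U (\<lambda>p. g p v w)) \<and>
     (\<forall>p\<in>U.
        linear (eta p) \<and> linear (phi p) \<and> bilinear (g p) \<and>
        (\<forall>v w. g p v w = g p w v) \<and>
        (\<forall>v. v \<noteq> 0 \<longrightarrow> g p v v > 0) \<and>
        eta p (xi p) = 1 \<and>
        (\<forall>v. phi p (phi p v) = - v + eta p v *\<^sub>R xi p) \<and>
        phi p (xi p) = 0 \<and>
        (\<forall>v. eta p v = g p v (xi p)) \<and>
        (\<forall>v w. ext_deriv1 eta p v w = 2 * g p v (phi p w)))"

definition h_tensor :: "('a::euclidean_space \<Rightarrow> 'a) \<Rightarrow> ('a \<Rightarrow> 'a \<Rightarrow> 'a) \<Rightarrow> 'a \<Rightarrow> 'a \<Rightarrow> 'a" where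
  "h_tensor xi phi p v = (1/2) *\<^sub>R lie_deriv_endo xi phi p v"

end

theory Submission
  imports Defs
begin

abbreviation FD :: "('a::euclidean_space \<Rightarrow> 'b::real_normed_vector) \<Rightarrow> 'a \<Rightarrow> 'a \<Rightarrow> 'b" where
  "FD f p \<equiv> frechet_derivative f (at p)"

lemma Ck_const: "Ck_on k U (\<lambda>q. c)"
proof (induction k arbitrary: c)
  case 0 then show ?case by simp
next
  case (Suc k)
  have "FD (\<lambda>q. c) p = (\<lambda>x. 0)" for p
    using frechet_derivative_at[OF has_derivative_const] by metis
  then show ?case using Suc by simp
qed

lemma smooth_const: "smooth_on U (\<lambda>q. c)"
  by (simp add: smooth_on_def Ck_const)

lemma smooth_diff: "smooth_on U f \<Longrightarrow> open U \<Longrightarrow> q \<in> U \<Longrightarrow> f differentiable (at q)"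
  unfolding smooth_on_def
  by (metis Ck_on.simps(2) at_within_open differentiable_on_def)

lemma smooth_deriv: "smooth_on U f \<Longrightarrow> smooth_on U (\<lambda>q. FD f q v)"
  unfolding smooth_on_def by (metis Ck_on.simps(2))

lemma smooth_cont: "smooth_on U f \<Longrightarrow> open U \<Longrightarrow> q \<in> U \<Longrightarrow> isCont f q"
  unfolding smooth_on_def
  by (metis Ck_on.simps(1) continuous_on_eq_continuous_at)

lemma FD_works: "f differentiable (at p) \<Longrightarrow> (f has_derivative FD f p) (at p)"
  using frechet_derivative_works by blast

lemma FD_linear: "f differentiable (at p) \<Longrightarrow> linear (FD f p)"
  using FD_works has_derivative_linear by blast

lemma FD_eq: "(f has_derivative f') (at p) \<Longrightarrow> FD f p = f'"
  using frechet_derivative_at by metis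

lemma FD_local: assumes "open U" "p \<in> U" "\<And>q. q \<in> U \<Longrightarrow> f q = g q"
  shows "FD f p = FD g p"
proof -
  have "(f has_derivative d) (at p) \<longleftrightarrow> (g has_derivative d) (at p)" for d
    using has_derivative_transform_within_open assms by metis
  then show ?thesis unfolding frechet_derivative_def by simp
qed

lemma diff_local: assumes "open U" "p \<in> U" "\<And>q. q \<in> U \<Longrightarrow> f q = g q" "f differentiable (at p)"
  shows "g differentiable (at p)"
  using assms has_derivative_transform_within_open unfolding differentiable_def by metis

lemma FD_const_zero: assumes "open U" "p \<in> U" "\<And>q. q \<in> U \<Longrightarrow> f q = c"
  shows "FD f p = (\<lambda>x. 0)"
proof -
  have "FD f p = FD (\<lambda>q. c) p" using FD_local assms by metis
  then show ?thesis using FD_eq[OF has_derivative_const] by metis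
qed

lemma apply_expand:
  assumes "linear F"
  shows "F w = (\<Sum>i\<in>Basis. (w \<bullet> i) *\<^sub>R F i)"
proof -
  have "F w = F (\<Sum>i\<in>Basis. (w \<bullet> i) *\<^sub>R i)" by (simp add: euclidean_representation)
  also have "\<dots> = (\<Sum>i\<in>Basis. (w \<bullet> i) *\<^sub>R F i)"
    using assms by (simp add: linear_sum linear_scale)
  finally show ?thesis .
qed

lemma apply_has_derivative:
  fixes F :: "'a::euclidean_space \<Rightarrow> 'a \<Rightarrow> 'b::real_normed_vector"
  assumes U: "open U" "p \<in> U" and lin: "\<And>q. q \<in> U \<Longrightarrow> linear (F q)"
    and dF: "\<And>i. i \<in> Basis \<Longrightarrow> (\<lambda>q. F q i) differentiable (at p)"
    and dX: "(X has_derivative X') (at p)"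
  shows "((\<lambda>q. F q (X q)) has_derivative
          (\<lambda>u. F p (X' u) + (\<Sum>i\<in>Basis. (X p \<bullet> i) *\<^sub>R FD (\<lambda>q. F q i) p u))) (at p)"
proof -
  have e: "F q (X q) = (\<Sum>i\<in>Basis. (X q \<bullet> i) *\<^sub>R F q i)" if "q \<in> U" for q
    by (rule apply_expand[OF lin[OF that]])
  have "((\<lambda>q. \<Sum>i\<in>Basis. (X q \<bullet> i) *\<^sub>R F q i) has_derivative
        (\<lambda>u. \<Sum>i\<in>Basis. (X p \<bullet> i) *\<^sub>R FD (\<lambda>q. F q i) p u + (X' u \<bullet> i) *\<^sub>R F p i)) (at p)"
    by (intro has_derivative_sum has_derivative_scaleR has_derivative_inner_left dX FD_works dF)
  moreover have "(\<lambda>u. \<Sum>i\<in>Basis. (X p \<bullet> i) *\<^sub>R FD (\<lambda>q. F q i) p u + (X' u \<bullet> i) *\<^sub>R F p i)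
     = (\<lambda>u. F p (X' u) + (\<Sum>i\<in>Basis. (X p \<bullet> i) *\<^sub>R FD (\<lambda>q. F q i) p u))"
  proof
    fix u
    have "F p (X' u) = (\<Sum>i\<in>Basis. (X' u \<bullet> i) *\<^sub>R F p i)" using apply_expand[OF lin[OF U(2)]] .
    then show "(\<Sum>i\<in>Basis. (X p \<bullet> i) *\<^sub>R FD (\<lambda>q. F q i) p u + (X' u \<bullet> i) *\<^sub>R F p i)
       = F p (X' u) + (\<Sum>i\<in>Basis. (X p \<bullet> i) *\<^sub>R FD (\<lambda>q. F q i) p u)"
      by (simp add: sum.distrib add.commute)
  qed
  ultimately have "((\<lambda>q. \<Sum>i\<in>Basis. (X q \<bullet> i) *\<^sub>R F q i) has_derivative
          (\<lambda>u. F p (X' u) + (\<Sum>i\<in>Basis. (X p \<bullet> i) *\<^sub>R FD (\<lambda>q. F q i) p u))) (at p)"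
    by simp
  then show ?thesis
    by (rule has_derivative_transform_within_open[OF _ U(1) U(2)]) (simp add: e)
qed

lemma FD_apply_const:
  fixes F :: "'a::euclidean_space \<Rightarrow> 'a \<Rightarrow> 'b::real_normed_vector"
  assumes U: "open U" "p \<in> U" and lin: "\<And>q. q \<in> U \<Longrightarrow> linear (F q)"
    and dF: "\<And>i. i \<in> Basis \<Longrightarrow> (\<lambda>q. F q i) differentiable (at p)"
  shows "((\<lambda>q. F q w) has_derivative (\<lambda>u. \<Sum>i\<in>Basis. (w \<bullet> i) *\<^sub>R FD (\<lambda>q. F q i) p u)) (at p)"
  using apply_has_derivative[OF U lin dF has_derivative_const[of w]] linear_0[OF lin[OF U(2)]] by simp

lemma apply_diff:
  fixes F :: "'a::euclidean_space \<Rightarrow> 'a \<Rightarrow> 'b::real_normed_vector"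
  assumes U: "open U" "p \<in> U" and lin: "\<And>q. q \<in> U \<Longrightarrow> linear (F q)"
    and dF: "\<And>i. i \<in> Basis \<Longrightarrow> (\<lambda>q. F q i) differentiable (at p)"
  shows "(\<lambda>q. F q w) differentiable (at p)"
  using FD_apply_const[OF assms] differentiable_def by blast

lemma apply_rule:
  fixes F :: "'a::euclidean_space \<Rightarrow> 'a \<Rightarrow> 'b::real_normed_vector"
  assumes U: "open U" "p \<in> U" and lin: "\<And>q. q \<in> U \<Longrightarrow> linear (F q)"
    and dF: "\<And>i. i \<in> Basis \<Longrightarrow> (\<lambda>q. F q i) differentiable (at p)"
    and dX: "X differentiable (at p)"
  shows "((\<lambda>q. F q (X q)) has_derivative
          (\<lambda>u. F p (FD X p u) + FD (\<lambda>q. F q (X p)) p u)) (at p)"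
  using apply_has_derivative[OF U lin dF FD_works[OF dX]] FD_eq[OF FD_apply_const[OF U lin dF, of "X p"]]
  by simp

lemma apply_rule_FD:
  fixes F :: "'a::euclidean_space \<Rightarrow> 'a \<Rightarrow> 'b::real_normed_vector"
  assumes U: "open U" "p \<in> U" and lin: "\<And>q. q \<in> U \<Longrightarrow> linear (F q)"
    and dF: "\<And>i. i \<in> Basis \<Longrightarrow> (\<lambda>q. F q i) differentiable (at p)"
    and dX: "X differentiable (at p)"
  shows "FD (\<lambda>q. F q (X q)) p u = F p (FD X p u) + FD (\<lambda>q. F q (X p)) p u"
  using FD_eq[OF apply_rule[OF assms]] by simp

lemma apply_rule_diff:
  fixes F :: "'a::euclidean_space \<Rightarrow> 'a \<Rightarrow> 'b::real_normed_vector"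
  assumes U: "open U" "p \<in> U" and lin: "\<And>q. q \<in> U \<Longrightarrow> linear (F q)"
    and dF: "\<And>i. i \<in> Basis \<Longrightarrow> (\<lambda>q. F q i) differentiable (at p)"
    and dX: "X differentiable (at p)"
  shows "(\<lambda>q. F q (X q)) differentiable (at p)"
  using apply_rule[OF assms] differentiable_def by blast

lemma linear_coeffs: "linear (\<lambda>w. \<Sum>i\<in>Basis. (w \<bullet> i) *\<^sub>R (c i :: 'b::real_normed_vector))"
proof (rule linearI)
  fix x y :: 'a
  show "(\<Sum>i\<in>Basis. ((x + y) \<bullet> i) *\<^sub>R c i) = (\<Sum>i\<in>Basis. (x \<bullet> i) *\<^sub>R c i) + (\<Sum>i\<in>Basis. (y \<bullet> i) *\<^sub>R c i)"
    by (simp add: inner_add_left scaleR_add_left sum.distrib)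
next
  fix r and x :: 'a
  show "(\<Sum>i\<in>Basis. ((r *\<^sub>R x) \<bullet> i) *\<^sub>R c i) = r *\<^sub>R (\<Sum>i\<in>Basis. (x \<bullet> i) *\<^sub>R c i)"
    by (simp add: scaleR_sum_right)
qed

lemma FD_apply_linear:
  fixes F :: "'a::euclidean_space \<Rightarrow> 'a \<Rightarrow> 'b::real_normed_vector"
  assumes U: "open U" "p \<in> U" and lin: "\<And>q. q \<in> U \<Longrightarrow> linear (F q)"
    and dF: "\<And>i. i \<in> Basis \<Longrightarrow> (\<lambda>q. F q i) differentiable (at p)"
  shows "linear (\<lambda>w. FD (\<lambda>q. F q w) p u)"
proof -
  have "(\<lambda>w. FD (\<lambda>q. F q w) p u) = (\<lambda>w. \<Sum>i\<in>Basis. (w \<bullet> i) *\<^sub>R FD (\<lambda>q. F q i) p u)"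
  proof (rule ext)
    fix w show "FD (\<lambda>q. F q w) p u = (\<Sum>i\<in>Basis. (w \<bullet> i) *\<^sub>R FD (\<lambda>q. F q i) p u)"
      using FD_eq[OF FD_apply_const[OF assms, of w]] by simp
  qed
  then show ?thesis by (simp only: linear_coeffs)
qed

lemma inner_sum_basis: "j \<in> Basis \<Longrightarrow> (\<Sum>i\<in>Basis. c i *\<^sub>R i) \<bullet> (j::'a::euclidean_space) = c j"
  by (simp add: inner_sum_left inner_Basis if_distrib sum.delta cong: if_cong)

lemma riesz:
  fixes B :: "'a::euclidean_space \<Rightarrow> 'a \<Rightarrow> real"
  assumes bl: "bilinear B" and pd: "\<forall>v. v \<noteq> 0 \<longrightarrow> B v v > 0" and lf: "linear f"
  shows "\<exists>!w. \<forall>z. B w z = f z"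
proof -
  have l1: "linear (\<lambda>x. B x y)" for y using bl unfolding bilinear_def by simp
  have l2: "linear (B x)" for x using bl unfolding bilinear_def by simp
  have zero: "d = 0" if "\<forall>i\<in>Basis. B d i = 0" for d
  proof -
    have "B d d = (\<Sum>i\<in>Basis. (d \<bullet> i) *\<^sub>R B d i)" by (rule apply_expand[OF l2])
    also have "\<dots> = 0" using that by simp
    finally have "B d d = 0" .
    then show ?thesis using pd by (metis less_irrefl)
  qed
  define M where "M w = (\<Sum>i\<in>Basis. B w i *\<^sub>R i)" for w
  have Mi: "M w \<bullet> j = B w j" if "j \<in> Basis" for w j
    unfolding M_def by (rule inner_sum_basis[OF that])
  have linM: "linear M"
  proof (rule linearI)
    fix x y
    show "M (x + y) = M x + M y" unfolding M_def
      using linear_add[OF l1] by (simp add: scaleR_add_left sum.distrib)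
  next
    fix r x
    show "M (r *\<^sub>R x) = r *\<^sub>R M x" unfolding M_def
      using linear_scale[OF l1] by (simp add: scaleR_sum_right)
  qed
  have injM: "inj M"
  proof (rule injI)
    fix x y assume xy: "M x = M y"
    have "\<forall>i\<in>Basis. B (x - y) i = 0"
    proof
      fix i :: 'a assume i: "i \<in> Basis"
      have "B x i = B y i" using Mi[OF i, of x] Mi[OF i, of y] xy by simp
      then show "B (x - y) i = 0" using linear_diff[OF l1, of x y] by simp
    qed
    then have "x - y = 0" by (rule zero)
    then show "x = y" by simp
  qed
  have "surj M" using linear_injective_imp_surjective[OF linM injM] by simp
  then obtain w where w: "M w = (\<Sum>i\<in>Basis. f i *\<^sub>R i)" by (metis surjD)
  have wj: "B w j = f j" if "j \<in> Basis" for j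
    using Mi[OF that, of w] inner_sum_basis[OF that, of f] w by simp
  have ex: "\<forall>z. B w z = f z"
  proof
    fix z
    have "B w z = (\<Sum>i\<in>Basis. (z \<bullet> i) *\<^sub>R B w i)" by (rule apply_expand[OF l2])
    also have "\<dots> = (\<Sum>i\<in>Basis. (z \<bullet> i) *\<^sub>R f i)" using wj by simp
    also have "\<dots> = f z" by (rule apply_expand[OF lf, symmetric])
    finally show "B w z = f z" .
  qed
  have un: "w' = w" if "\<forall>z. B w' z = f z" for w'
  proof -
    have "\<forall>i\<in>Basis. B (w' - w) i = 0" using that ex linear_diff[OF l1] by simp
    then have "w' - w = 0" by (rule zero)
    then show ?thesis by simp
  qed
  show ?thesis using ex un by blast
qed

locale cms =
  fixes U :: "'a::euclidean_space set" and eta :: "'a \<Rightarrow> 'a \<Rightarrow> real" and xi :: "'a \<Rightarrow> 'a"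
    and phi :: "'a \<Rightarrow> 'a \<Rightarrow> 'a" and g :: "'a \<Rightarrow> 'a \<Rightarrow> 'a \<Rightarrow> real"
  assumes cm: "contact_metric_on U eta xi phi g"
begin

lemma openU: "open U" using cm unfolding contact_metric_on_def by simp
lemma sm_xi: "smooth_on U xi" using cm unfolding contact_metric_on_def by simp
lemma sm_eta: "smooth_on U (\<lambda>p. eta p v)" using cm unfolding contact_metric_on_def by simp
lemma sm_phi: "smooth_on U (\<lambda>p. phi p v)" using cm unfolding contact_metric_on_def by simp
lemma sm_g: "smooth_on U (\<lambda>p. g p v w)" using cm unfolding contact_metric_on_def by simp

context fixes q assumes q: "q \<in> U"
begin
lemma lin_eta: "linear (eta q)" using cm q unfolding contact_metric_on_def by blast
lemma lin_phi: "linear (phi q)" using cm q unfolding contact_metric_on_def by blast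
lemma bil_g: "bilinear (g q)" using cm q unfolding contact_metric_on_def by blast
lemma g_sym: "g q v w = g q w v" using cm q unfolding contact_metric_on_def by blast
lemma g_pos: "v \<noteq> 0 \<Longrightarrow> g q v v > 0" using cm q unfolding contact_metric_on_def by blast
lemma eta_xi: "eta q (xi q) = 1" using cm q unfolding contact_metric_on_def by blast
lemma phi2: "phi q (phi q v) = - v + eta q v *\<^sub>R xi q" using cm q unfolding contact_metric_on_def by blast
lemma phi_xi: "phi q (xi q) = 0" using cm q unfolding contact_metric_on_def by blast
lemma eta_g: "eta q v = g q v (xi q)" using cm q unfolding contact_metric_on_def by blast
lemma deta: "ext_deriv1 eta q v w = 2 * g q v (phi q w)" using cm q unfolding contact_metric_on_def by blast
lemma lin_g1: "linear (\<lambda>x. g q x y)" using bil_g unfolding bilinear_def by simp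
lemma lin_g2: "linear (g q x)" using bil_g unfolding bilinear_def by simp

lemma g_zero: "(\<And>w. g q v w = g q v' w) \<Longrightarrow> v = v'"
proof -
  assume "\<And>w. g q v w = g q v' w"
  then have "g q (v - v') (v - v') = 0" using linear_diff[OF lin_g1] by simp
  then show "v = v'" using g_pos by (metis less_irrefl right_minus_eq)
qed

lemma d_xi: "xi differentiable (at q)" using smooth_diff[OF sm_xi openU q] .
lemma d_eta: "(\<lambda>p. eta p v) differentiable (at q)" using smooth_diff[OF sm_eta openU q] .
lemma d_phi: "(\<lambda>p. phi p v) differentiable (at q)" using smooth_diff[OF sm_phi openU q] .
lemma d_g: "(\<lambda>p. g p v w) differentiable (at q)" using smooth_diff[OF sm_g openU q] .
lemma d2_xi: "(\<lambda>p. FD xi p a) differentiable (at q)" using smooth_diff[OF smooth_deriv[OF sm_xi] openU q] .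
lemma d2_eta: "(\<lambda>p. FD (\<lambda>r. eta r v) p a) differentiable (at q)"
  using smooth_diff[OF smooth_deriv[OF sm_eta] openU q] .
lemma d2_phi: "(\<lambda>p. FD (\<lambda>r. phi r v) p a) differentiable (at q)"
  using smooth_diff[OF smooth_deriv[OF sm_phi] openU q] .
lemma lin_Dxi: "linear (FD xi q)" using FD_linear[OF d_xi] .
lemma lin_Deta: "linear (FD (\<lambda>r. eta r v) q)" using FD_linear[OF d_eta] .
lemma lin_Dphi: "linear (FD (\<lambda>r. phi r v) q)" using FD_linear[OF d_phi] .
lemma lin_Dg: "linear (FD (\<lambda>r. g r v w) q)" using FD_linear[OF d_g] .
end

lemma lin_Dg_arg: "q \<in> U \<Longrightarrow> linear (\<lambda>z. FD (\<lambda>r. g r v z) q u)"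
  by (rule FD_apply_linear[OF openU]) (auto intro: lin_g2 d_g)

lemma lin_Deta_arg: "q \<in> U \<Longrightarrow> linear (\<lambda>z. FD (\<lambda>r. eta r z) q u)"
  by (rule FD_apply_linear[OF openU]) (auto intro: lin_eta d_eta)

lemma lin_Dphi_arg: "q \<in> U \<Longrightarrow> linear (\<lambda>z. FD (\<lambda>r. phi r z) q u)"
  by (rule FD_apply_linear[OF openU]) (auto intro: lin_phi d_phi)

definition K :: "'a \<Rightarrow> 'a \<Rightarrow> 'a \<Rightarrow> 'a \<Rightarrow> real" where
  "K p u v z = (FD (\<lambda>q. g q v z) p u + FD (\<lambda>q. g q u z) p v - FD (\<lambda>q. g q u v) p z) / 2"

lemma K_lin: assumes p: "p \<in> U" shows "linear (K p u v)"
proof -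
  note la = lin_Dg_arg[OF p, of v u] and lb = lin_Dg_arg[OF p, of u v] and lc = lin_Dg[OF p, of u v]
  show ?thesis unfolding K_def
  proof (rule linearI)
    fix x y
    show "(FD (\<lambda>q. g q v (x + y)) p u + FD (\<lambda>q. g q u (x + y)) p v - FD (\<lambda>q. g q u v) p (x + y)) / 2 =
       (FD (\<lambda>q. g q v x) p u + FD (\<lambda>q. g q u x) p v - FD (\<lambda>q. g q u v) p x) / 2 +
       (FD (\<lambda>q. g q v y) p u + FD (\<lambda>q. g q u y) p v - FD (\<lambda>q. g q u v) p y) / 2"
      using linear_add[OF la, of x y] linear_add[OF lb, of x y] linear_add[OF lc, of x y]
      by (simp add: field_simps)
  next
    fix r x
    show "(FD (\<lambda>q. g q v (r *\<^sub>R x)) p u + FD (\<lambda>q. g q u (r *\<^sub>R x)) p v - FD (\<lambda>q. g q u v) p (r *\<^sub>R x)) / 2 =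
       r *\<^sub>R ((FD (\<lambda>q. g q v x) p u + FD (\<lambda>q. g q u x) p v - FD (\<lambda>q. g q u v) p x) / 2)"
      using linear_scale[OF la, of r x] linear_scale[OF lb, of r x] linear_scale[OF lc, of r x]
      by (simp add: field_simps)
  qed
qed

end

context cms begin

lemma Gam_prop: assumes p: "p \<in> U" shows "g p (christoffel g p u v) z = K p u v z"
proof -
  have ex: "\<exists>!w. \<forall>z. g p w z = K p u v z"
    by (rule riesz[OF bil_g[OF p] _ K_lin[OF p]]) (use g_pos[OF p] in blast)
  have "christoffel g p u v = (THE w. \<forall>z. g p w z = K p u v z)"
    unfolding christoffel_def K_def by simp
  then show ?thesis using theI'[OF ex] by simp
qed

lemma FD_g_sym: "p \<in> U \<Longrightarrow> FD (\<lambda>q. g q u v) p = FD (\<lambda>q. g q v u) p"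
  by (rule FD_local[OF openU]) (auto intro: g_sym)

lemma Gam_sym: assumes p: "p \<in> U" shows "christoffel g p u v = christoffel g p v u"
proof (rule g_zero[OF p])
  fix z
  have "K p u v z = K p v u z" unfolding K_def using FD_g_sym[OF p, of u v] by simp
  then show "g p (christoffel g p u v) z = g p (christoffel g p v u) z"
    using Gam_prop[OF p] by simp
qed

lemma metric: assumes p: "p \<in> U"
  shows "FD (\<lambda>q. g q v w) p u = g p (christoffel g p u v) w + g p v (christoffel g p u w)"
proof -
  have "g p v (christoffel g p u w) = g p (christoffel g p u w) v" by (rule g_sym[OF p])
  then have "g p (christoffel g p u v) w + g p v (christoffel g p u w) = K p u v w + K p u w v"
    using Gam_prop[OF p] by simp
  also have "\<dots> = FD (\<lambda>q. g q v w) p u"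
    unfolding K_def using FD_g_sym[OF p, of v w] FD_g_sym[OF p, of u w] FD_g_sym[OF p, of u v]
    by (simp add: field_simps)
  finally show ?thesis by simp
qed

definition nab :: "('a \<Rightarrow> 'a) \<Rightarrow> 'a \<Rightarrow> 'a \<Rightarrow> 'a" where
  "nab X p u = FD X p u + christoffel g p u (X p)"

lemma levi_civita_nab: "levi_civita g X Y p = nab Y p (X p)"
  unfolding levi_civita_def nab_def dir_deriv_def by simp

lemma metric_fields: assumes p: "p \<in> U" and dX: "X differentiable (at p)" and dY: "Y differentiable (at p)"
  shows "FD (\<lambda>q. g q (X q) (Y q)) p u = g p (nab X p u) (Y p) + g p (X p) (nab Y p u)"
proof -
  have d1: "(\<lambda>q. g q i (Y q)) differentiable (at p)" for i
    by (rule apply_rule_diff[OF openU p _ _ dY]) (auto intro: lin_g2 d_g p)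
  have "FD (\<lambda>q. g q (X q) (Y q)) p u = g p (FD X p u) (Y p) + FD (\<lambda>q. g q (X p) (Y q)) p u"
    by (rule apply_rule_FD[OF openU p _ _ dX, where F="\<lambda>q w. g q w (Y q)"]) (auto intro: lin_g1 d1 p)
  also have "FD (\<lambda>q. g q (X p) (Y q)) p u = g p (X p) (FD Y p u) + FD (\<lambda>q. g q (X p) (Y p)) p u"
    by (rule apply_rule_FD[OF openU p _ _ dY]) (auto intro: lin_g2 d_g p)
  also have "FD (\<lambda>q. g q (X p) (Y p)) p u = g p (christoffel g p u (X p)) (Y p) + g p (X p) (christoffel g p u (Y p))"
    by (rule metric[OF p])
  finally show ?thesis unfolding nab_def
    using linear_add[OF lin_g1[OF p]] linear_add[OF lin_g2[OF p]] by simp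
qed

definition A :: "'a \<Rightarrow> 'a \<Rightarrow> 'a" where "A p u = nab xi p u"

lemma FD_eta: assumes p: "p \<in> U"
  shows "FD (\<lambda>q. eta q w) p u = g p w (A p u) + g p (christoffel g p u w) (xi p)"
proof -
  have "FD (\<lambda>q. eta q w) p u = FD (\<lambda>q. g q w (xi q)) p u"
    using FD_local[OF openU p, of "\<lambda>q. eta q w" "\<lambda>q. g q w (xi q)"] eta_g by simp
  also have "\<dots> = g p w (FD xi p u) + FD (\<lambda>q. g q w (xi p)) p u"
    by (rule apply_rule_FD[OF openU p _ _ d_xi[OF p]]) (auto intro: lin_g2 d_g p)
  also have "FD (\<lambda>q. g q w (xi p)) p u = g p (christoffel g p u w) (xi p) + g p w (christoffel g p u (xi p))"
    by (rule metric[OF p])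
  finally show ?thesis unfolding A_def nab_def
    using linear_add[OF lin_g2[OF p]] by simp
qed

lemma A_skew: assumes p: "p \<in> U"
  shows "g p w (A p v) - g p v (A p w) = 2 * g p v (phi p w)"
proof -
  have "ext_deriv1 eta p v w = g p w (A p v) - g p v (A p w)"
    unfolding ext_deriv1_def FD_eta[OF p] using Gam_sym[OF p, of v w] by simp
  then show ?thesis using deta[OF p] by simp
qed

lemma phi_skew: assumes p: "p \<in> U" shows "g p v (phi p w) = - g p w (phi p v)"
  using deta[OF p, of v w] deta[OF p, of w v] unfolding ext_deriv1_def by simp

lemma eta_phi: assumes p: "p \<in> U" shows "eta p (phi p v) = 0"
proof -
  have "eta p (phi p v) = g p (xi p) (phi p v)" using eta_g[OF p] g_sym[OF p] by simp
  also have "\<dots> = - g p v (phi p (xi p))" by (rule phi_skew[OF p])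
  also have "\<dots> = 0" using phi_xi[OF p] linear_0[OF lin_g2[OF p]] by simp
  finally show ?thesis .
qed

lemma A_xi_perp: assumes p: "p \<in> U" shows "g p (A p u) (xi p) = 0"
proof -
  have "FD (\<lambda>q. g q (xi q) (xi q)) p = (\<lambda>x. 0)"
    by (rule FD_const_zero[OF openU p, where c=1]) (use eta_g eta_xi in metis)
  then have "0 = g p (A p u) (xi p) + g p (xi p) (A p u)"
    using metric_fields[OF p d_xi[OF p] d_xi[OF p], of u] unfolding A_def by simp
  then show ?thesis using g_sym[OF p] by simp
qed

lemma A_xi: assumes p: "p \<in> U" shows "A p (xi p) = 0"
proof (rule g_zero[OF p])
  fix v
  have "g p (xi p) (A p v) - g p v (A p (xi p)) = 2 * g p v (phi p (xi p))" by (rule A_skew[OF p])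
  moreover have "g p 0 v = 0" using linear_0[OF lin_g1[OF p]] by simp
  ultimately have "g p v (A p (xi p)) = 0"
    using phi_xi[OF p] linear_0[OF lin_g2[OF p]] A_xi_perp[OF p, of v] g_sym[OF p] by simp
  then show "g p (A p (xi p)) v = g p 0 v"
    using g_sym[OF p] \<open>g p 0 v = 0\<close> by metis
qed

end

context cms begin

definition Lie :: "('a \<Rightarrow> 'a \<Rightarrow> 'a) \<Rightarrow> 'a \<Rightarrow> 'a \<Rightarrow> 'a" where
  "Lie T p v = FD (\<lambda>q. T q v) p (xi p) - FD xi p (T p v) + T p (FD xi p v)"

definition LieE :: "'a \<Rightarrow> 'a \<Rightarrow> real" where
  "LieE p w = FD (\<lambda>q. eta q w) p (xi p) + eta p (FD xi p w)"

lemma FD_const_fun: "FD (\<lambda>q. c) p = (\<lambda>x. 0)"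
  using FD_eq[OF has_derivative_const] by metis

lemma lie_eq: assumes "linear (T p)" shows "lie_deriv_endo xi T p v = Lie T p v"
  unfolding lie_deriv_endo_def lie_bracket_def dir_deriv_def Lie_def FD_const_fun
  using linear_neg[OF assms] by simp

lemma Lie_local: assumes p: "p \<in> U" and eq: "\<And>q w. q \<in> U \<Longrightarrow> T q w = T' q w"
  shows "Lie T p v = Lie T' p v"
proof -
  have "FD (\<lambda>q. T q v) p = FD (\<lambda>q. T' q v) p" by (rule FD_local[OF openU p]) (simp add: eq)
  then show ?thesis unfolding Lie_def using eq[OF p] by simp
qed

lemma LieE_zero: assumes p: "p \<in> U" shows "LieE p w = 0"
proof -
  have "g p (xi p) (phi p w) = eta p (phi p w)" using eta_g[OF p] g_sym[OF p] by simp
  then have "ext_deriv1 eta p (xi p) w = 0" using deta[OF p] eta_phi[OF p] by simp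
  then have a: "FD (\<lambda>q. eta q w) p (xi p) = FD (\<lambda>q. eta q (xi p)) p w"
    unfolding ext_deriv1_def by simp
  have "FD (\<lambda>q. eta q (xi q)) p = (\<lambda>x. 0)"
    by (rule FD_const_zero[OF openU p, where c=1]) (use eta_xi in metis)
  moreover have "FD (\<lambda>q. eta q (xi q)) p w = eta p (FD xi p w) + FD (\<lambda>q. eta q (xi p)) p w"
    by (rule apply_rule_FD[OF openU p _ _ d_xi[OF p]]) (auto intro: lin_eta d_eta p)
  ultimately show ?thesis unfolding LieE_def a by simp
qed

lemma Lie_comp:
  assumes p: "p \<in> U" and linS: "\<And>q. q \<in> U \<Longrightarrow> linear (S q)"
    and dS: "\<And>i. (\<lambda>q. S q i) differentiable (at p)"
    and dT: "(\<lambda>q. T q v) differentiable (at p)" and linT: "linear (T p)"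
  shows "Lie (\<lambda>q w. S q (T q w)) p v = Lie S p (T p v) + S p (Lie T p v)"
proof -
  have "FD (\<lambda>q. S q (T q v)) p (xi p) = S p (FD (\<lambda>q. T q v) p (xi p)) + FD (\<lambda>q. S q (T p v)) p (xi p)"
    by (rule apply_rule_FD[OF openU p linS dS dT])
  then show ?thesis unfolding Lie_def
    using linear_add[OF linS[OF p]] linear_diff[OF linS[OF p]] by (simp add: algebra_simps)
qed

lemma eta_Lie:
  assumes p: "p \<in> U" and z: "\<And>q w. q \<in> U \<Longrightarrow> eta q (T q w) = 0"
    and dT: "(\<lambda>q. T q v) differentiable (at p)" and linT: "linear (T p)"
  shows "eta p (Lie T p v) = 0"
proof -
  have "FD (\<lambda>q. eta q (T q v)) p = (\<lambda>x. 0)"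
    by (rule FD_const_zero[OF openU p, where c=0]) (use z in metis)
  moreover have "FD (\<lambda>q. eta q (T q v)) p (xi p) = eta p (FD (\<lambda>q. T q v) p (xi p)) + FD (\<lambda>q. eta q (T p v)) p (xi p)"
    by (rule apply_rule_FD[OF openU p _ _ dT]) (auto intro: lin_eta d_eta p)
  ultimately have e: "eta p (FD (\<lambda>q. T q v) p (xi p)) = - FD (\<lambda>q. eta q (T p v)) p (xi p)" by simp
  have "eta p (Lie T p v) = eta p (FD (\<lambda>q. T q v) p (xi p)) - eta p (FD xi p (T p v)) + eta p (T p (FD xi p v))"
    unfolding Lie_def using linear_add[OF lin_eta[OF p]] linear_diff[OF lin_eta[OF p]] by simp
  also have "\<dots> = - LieE p (T p v)" unfolding LieE_def e using z[OF p] by simp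
  finally show ?thesis using LieE_zero[OF p] by simp
qed

lemma Lie_phi_xi: assumes p: "p \<in> U" shows "Lie phi p (xi p) = 0"
proof -
  have "FD (\<lambda>q. phi q (xi q)) p = (\<lambda>x. 0)"
    by (rule FD_const_zero[OF openU p, where c=0]) (use phi_xi in metis)
  moreover have "FD (\<lambda>q. phi q (xi q)) p (xi p) = phi p (FD xi p (xi p)) + FD (\<lambda>q. phi q (xi p)) p (xi p)"
    by (rule apply_rule_FD[OF openU p _ _ d_xi[OF p]]) (auto intro: lin_phi d_phi p)
  ultimately show ?thesis unfolding Lie_def using phi_xi[OF p] linear_0[OF lin_Dxi[OF p]] by (simp add: add.commute)
qed

lemma Lie_phi2: assumes p: "p \<in> U" shows "Lie phi p (phi p v) + phi p (Lie phi p v) = 0"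
proof -
  have "Lie (\<lambda>q w. phi q (phi q w)) p v = Lie phi p (phi p v) + phi p (Lie phi p v)"
    by (rule Lie_comp[OF p]) (auto intro: lin_phi d_phi p)
  moreover have "Lie (\<lambda>q w. phi q (phi q w)) p v = Lie (\<lambda>q w. - w + eta q w *\<^sub>R xi q) p v"
    by (rule Lie_local[OF p]) (simp add: phi2)
  moreover have "Lie (\<lambda>q w. - w + eta q w *\<^sub>R xi q) p v = LieE p v *\<^sub>R xi p"
  proof -
    have hd: "((\<lambda>q. - v + eta q v *\<^sub>R xi q) has_derivative
          (\<lambda>u. 0 + (eta p v *\<^sub>R FD xi p u + FD (\<lambda>q. eta q v) p u *\<^sub>R xi p))) (at p)"
      by (rule has_derivative_add[OF has_derivative_const has_derivative_scaleR[OF FD_works[OF d_eta[OF p]] FD_works[OF d_xi[OF p]]]])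
    have e1: "FD (\<lambda>q. - v + eta q v *\<^sub>R xi q) p (xi p) = eta p v *\<^sub>R FD xi p (xi p) + FD (\<lambda>q. eta q v) p (xi p) *\<^sub>R xi p"
      using FD_eq[OF hd] by simp
    have e2: "FD xi p (- v + eta p v *\<^sub>R xi p) = - FD xi p v + eta p v *\<^sub>R FD xi p (xi p)"
      using linear_add[OF lin_Dxi[OF p]] linear_neg[OF lin_Dxi[OF p]] linear_scale[OF lin_Dxi[OF p]] linear_diff[OF lin_Dxi[OF p]] by simp
    have "Lie (\<lambda>q w. - w + eta q w *\<^sub>R xi q) p v
       = FD (\<lambda>q. - v + eta q v *\<^sub>R xi q) p (xi p) - FD xi p (- v + eta p v *\<^sub>R xi p)
         + (- FD xi p v + eta p (FD xi p v) *\<^sub>R xi p)"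
      unfolding Lie_def by simp
    also have "\<dots> = FD (\<lambda>q. eta q v) p (xi p) *\<^sub>R xi p + eta p (FD xi p v) *\<^sub>R xi p"
      unfolding e1 e2 by simp
    also have "\<dots> = LieE p v *\<^sub>R xi p" unfolding LieE_def by (simp add: scaleR_add_left)
    finally show ?thesis .
  qed
  ultimately show ?thesis using LieE_zero[OF p] by simp
qed

lemma Lg: assumes p: "p \<in> U"
  shows "FD (\<lambda>q. g q v w) p (xi p) + g p (FD xi p v) w + g p v (FD xi p w) = g p (A p v) w + g p v (A p w)"
  unfolding A_def nab_def metric[OF p] using Gam_sym[OF p]
    linear_add[OF lin_g1[OF p]] linear_add[OF lin_g2[OF p]] by (simp add: algebra_simps)

end

lemma mvt_line:
  fixes F :: "'a::euclidean_space \<Rightarrow> real"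
  assumes t: "0 < t" and dF: "\<And>s. 0 \<le> s \<Longrightarrow> s \<le> t \<Longrightarrow> F differentiable (at (x + s *\<^sub>R v))"
  shows "\<exists>s. 0 < s \<and> s < t \<and> F (x + t *\<^sub>R v) - F x = t * FD F (x + s *\<^sub>R v) v"
proof -
  define \<phi> where "\<phi> s = F (x + s *\<^sub>R v)" for s
  have der: "(\<phi> has_derivative (\<lambda>h. FD F (x + s *\<^sub>R v) (h *\<^sub>R v))) (at s)" if "0 \<le> s" "s \<le> t" for s
  proof -
    have l: "((\<lambda>s. x + s *\<^sub>R v) has_derivative (\<lambda>h. h *\<^sub>R v)) (at s)"
      by (intro derivative_eq_intros) auto
    have "((F \<circ> (\<lambda>s. x + s *\<^sub>R v)) has_derivative (FD F (x + s *\<^sub>R v) \<circ> (\<lambda>h. h *\<^sub>R v))) (at s)"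
      by (rule diff_chain_at[OF l]) (rule FD_works[OF dF[OF that]])
    then show ?thesis unfolding \<phi>_def comp_def by simp
  qed
  have cont: "continuous_on {0..t} \<phi>"
    using der has_derivative_continuous by (metis atLeastAtMost_iff continuous_at_imp_continuous_on)
  obtain s where s: "0 < s" "s < t" "\<phi> t - \<phi> 0 = FD F (x + s *\<^sub>R v) ((t - 0) *\<^sub>R v)"
    by (rule mvt[OF t cont, of "\<lambda>s h. FD F (x + s *\<^sub>R v) (h *\<^sub>R v)"]) (use der in auto)
  have "FD F (x + s *\<^sub>R v) ((t - 0) *\<^sub>R v) = t * FD F (x + s *\<^sub>R v) v"
    using linear_scale[OF FD_linear[OF dF]] s by simp
  then show ?thesis using s unfolding \<phi>_def by auto
qed

lemma schwarz_step:
  fixes f :: "'a::euclidean_space \<Rightarrow> real"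
  assumes t: "0 < t"
    and inU: "\<And>s s'. 0 \<le> s \<Longrightarrow> s \<le> t \<Longrightarrow> 0 \<le> s' \<Longrightarrow> s' \<le> t \<Longrightarrow> p + s *\<^sub>R a + s' *\<^sub>R b \<in> U"
    and df: "\<And>q. q \<in> U \<Longrightarrow> f differentiable (at q)"
    and dd: "\<And>q c. q \<in> U \<Longrightarrow> (\<lambda>q. FD f q c) differentiable (at q)"
  shows "\<exists>s s'. 0 < s \<and> s < t \<and> 0 < s' \<and> s' < t \<and>
     f (p + t *\<^sub>R a + t *\<^sub>R b) - f (p + t *\<^sub>R a) - f (p + t *\<^sub>R b) + f p
       = t * (t * FD (\<lambda>q. FD f q a) (p + s *\<^sub>R a + s' *\<^sub>R b) b)"
proof -
  define \<psi> where "\<psi> q = f (q + t *\<^sub>R b) - f q" for q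
  have dpsi: "(\<psi> has_derivative (\<lambda>u. FD f (q + t *\<^sub>R b) u - FD f q u)) (at q)"
    if "q \<in> U" "q + t *\<^sub>R b \<in> U" for q
  proof -
    have l: "((\<lambda>q. q + t *\<^sub>R b) has_derivative (\<lambda>u. u)) (at q)"
      by (intro derivative_eq_intros) auto
    have "((f \<circ> (\<lambda>q. q + t *\<^sub>R b)) has_derivative (FD f (q + t *\<^sub>R b) \<circ> (\<lambda>u. u))) (at q)"
      by (rule diff_chain_at[OF l]) (rule FD_works[OF df[OF that(2)]])
    then have "((\<lambda>q. f (q + t *\<^sub>R b)) has_derivative FD f (q + t *\<^sub>R b)) (at q)"
      unfolding comp_def by simp
    then show ?thesis unfolding \<psi>_def
      by (intro has_derivative_diff FD_works df that)
  qed
  have in1: "p + s *\<^sub>R a \<in> U" "p + s *\<^sub>R a + t *\<^sub>R b \<in> U" if "0 \<le> s" "s \<le> t" for s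
    using inU[OF that, of 0] inU[OF that, of t] t by auto
  obtain s where s: "0 < s" "s < t"
    "\<psi> (p + t *\<^sub>R a) - \<psi> p = t * FD \<psi> (p + s *\<^sub>R a) a"
    using mvt_line[OF t, of \<psi> p a] dpsi in1 differentiable_def by blast
  have fs: "FD \<psi> (p + s *\<^sub>R a) a = FD f (p + s *\<^sub>R a + t *\<^sub>R b) a - FD f (p + s *\<^sub>R a) a"
    using FD_eq[OF dpsi[OF in1[of s]]] s by simp
  obtain s' where s': "0 < s'" "s' < t"
    "FD f (p + s *\<^sub>R a + t *\<^sub>R b) a - FD f (p + s *\<^sub>R a) a
      = t * FD (\<lambda>q. FD f q a) (p + s *\<^sub>R a + s' *\<^sub>R b) b"
    using mvt_line[OF t, of "\<lambda>q. FD f q a" "p + s *\<^sub>R a" b] dd inU s by auto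
  have "\<psi> (p + t *\<^sub>R a) - \<psi> p = f (p + t *\<^sub>R a + t *\<^sub>R b) - f (p + t *\<^sub>R a) - f (p + t *\<^sub>R b) + f p"
    unfolding \<psi>_def by simp
  then show ?thesis using s s' fs by metis
qed

lemma schwarz:
  fixes f :: "'a::euclidean_space \<Rightarrow> real"
  assumes U: "open U" "p \<in> U" and sf: "smooth_on U f"
  shows "FD (\<lambda>q. FD f q a) p b = FD (\<lambda>q. FD f q b) p a"
proof (rule ccontr)
  assume ne: "FD (\<lambda>q. FD f q a) p b \<noteq> FD (\<lambda>q. FD f q b) p a"
  define d1 where "d1 q = FD (\<lambda>q. FD f q a) q b" for q
  define d2 where "d2 q = FD (\<lambda>q. FD f q b) q a" for q
  define e where "e = \<bar>d1 p - d2 p\<bar> / 2"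
  have e: "e > 0" using ne unfolding e_def d1_def d2_def by simp
  have df: "\<And>q. q \<in> U \<Longrightarrow> f differentiable (at q)" using smooth_diff[OF sf U(1)] .
  have dd: "\<And>q c. q \<in> U \<Longrightarrow> (\<lambda>q. FD f q c) differentiable (at q)"
    using smooth_diff[OF smooth_deriv[OF sf] U(1)] .
  have c1: "isCont d1 p" unfolding d1_def by (rule smooth_cont[OF smooth_deriv[OF smooth_deriv[OF sf]] U])
  have c2: "isCont d2 p" unfolding d2_def by (rule smooth_cont[OF smooth_deriv[OF smooth_deriv[OF sf]] U])
  obtain r1 where r1: "r1 > 0" "\<And>q. dist q p < r1 \<Longrightarrow> dist (d1 q) (d1 p) < e"
    using c1 e unfolding continuous_at_eps_delta by blast
  obtain r2 where r2: "r2 > 0" "\<And>q. dist q p < r2 \<Longrightarrow> dist (d2 q) (d2 p) < e"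
    using c2 e unfolding continuous_at_eps_delta by blast
  obtain r where r: "r > 0" "ball p r \<subseteq> U" using U openE by blast
  define N where "N = norm a + norm b + 1"
  have N: "N > 0" unfolding N_def by (simp add: add_nonneg_pos)
  define t where "t = min r (min r1 r2) / (2 * N)"
  have t: "t > 0" unfolding t_def using r r1 r2 N by simp
  have tN: "t * N < r" "t * N < r1" "t * N < r2" unfolding t_def using r r1 r2 N by auto
  have small: "dist (p + s *\<^sub>R a + s' *\<^sub>R b) p \<le> t * N" if "0 \<le> s" "s \<le> t" "0 \<le> s'" "s' \<le> t" for s s'
  proof -
    have "dist (p + s *\<^sub>R a + s' *\<^sub>R b) p = norm (s *\<^sub>R a + s' *\<^sub>R b)" by (simp add: dist_norm)
    also have "\<dots> \<le> norm (s *\<^sub>R a) + norm (s' *\<^sub>R b)" by (rule norm_triangle_ineq)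
    also have "\<dots> = s * norm a + s' * norm b" using that by simp
    also have "\<dots> \<le> t * norm a + t * norm b" using that by (intro add_mono mult_right_mono) auto
    also have "\<dots> \<le> t * N" unfolding N_def using t by (simp add: algebra_simps)
    finally show ?thesis .
  qed
  have inU: "p + s *\<^sub>R a + s' *\<^sub>R b \<in> U" if "0 \<le> s" "s \<le> t" "0 \<le> s'" "s' \<le> t" for s s'
  proof -
    have "dist (p + s *\<^sub>R a + s' *\<^sub>R b) p < r" using small[OF that] tN by linarith
    then show ?thesis using r by (auto simp: dist_commute)
  qed
  have inU': "p + s *\<^sub>R b + s' *\<^sub>R a \<in> U" if "0 \<le> s" "s \<le> t" "0 \<le> s'" "s' \<le> t" for s s'
    using inU[OF that(3,4,1,2)] by (simp add: add_ac)
  obtain s s' where ss: "0 < s" "s < t" "0 < s'" "s' < t"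
    "f (p + t *\<^sub>R a + t *\<^sub>R b) - f (p + t *\<^sub>R a) - f (p + t *\<^sub>R b) + f p
       = t * (t * d1 (p + s *\<^sub>R a + s' *\<^sub>R b))"
    using schwarz_step[OF t inU df dd] unfolding d1_def by blast
  obtain u u' where uu: "0 < u" "u < t" "0 < u'" "u' < t"
    "f (p + t *\<^sub>R b + t *\<^sub>R a) - f (p + t *\<^sub>R b) - f (p + t *\<^sub>R a) + f p
       = t * (t * d2 (p + u *\<^sub>R b + u' *\<^sub>R a))"
    using schwarz_step[OF t inU' df dd] unfolding d2_def by blast
  have "p + t *\<^sub>R b + t *\<^sub>R a = p + t *\<^sub>R a + t *\<^sub>R b" by (simp add: add_ac)
  then have "f (p + t *\<^sub>R b + t *\<^sub>R a) = f (p + t *\<^sub>R a + t *\<^sub>R b)" by (rule arg_cong)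
  then have "t * (t * d1 (p + s *\<^sub>R a + s' *\<^sub>R b)) = t * (t * d2 (p + u *\<^sub>R b + u' *\<^sub>R a))"
    using ss(5) uu(5) by linarith
  then have eq: "d1 (p + s *\<^sub>R a + s' *\<^sub>R b) = d2 (p + u *\<^sub>R b + u' *\<^sub>R a)" using t by simp
  have "dist (p + s *\<^sub>R a + s' *\<^sub>R b) p < r1" using small[of s s'] ss tN by force
  then have x1: "dist (d1 (p + s *\<^sub>R a + s' *\<^sub>R b)) (d1 p) < e" by (rule r1(2))
  have "dist (p + u' *\<^sub>R a + u *\<^sub>R b) p < r2" using small[of u' u] uu tN by force
  then have "dist (p + u *\<^sub>R b + u' *\<^sub>R a) p < r2" by (simp add: add_ac)
  then have x2: "dist (d2 (p + u *\<^sub>R b + u' *\<^sub>R a)) (d2 p) < e" by (rule r2(2))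
  from x1 x2 eq have "\<bar>d1 p - d2 p\<bar> < 2 * e" unfolding dist_real_def by linarith
  then show False unfolding e_def by simp
qed

context cms begin

lemma iota_zero: assumes q: "q \<in> U"
  shows "FD (\<lambda>r. eta r w) q (xi q) - FD (\<lambda>r. eta r (xi q)) q w = 0"
proof -
  have "g q (xi q) (phi q w) = eta q (phi q w)" using eta_g[OF q] g_sym[OF q] by simp
  then have "ext_deriv1 eta q (xi q) w = 0" using deta[OF q] eta_phi[OF q] by simp
  then show ?thesis unfolding ext_deriv1_def by simp
qed

lemma eqn: assumes p: "p \<in> U"
  shows "FD (\<lambda>r. eta r w) p (FD xi p v) + FD (\<lambda>q. FD (\<lambda>r. eta r w) q (xi p)) p v
       - FD (\<lambda>r. eta r (FD xi p v)) p w - FD (\<lambda>q. FD (\<lambda>r. eta r (xi p)) q w) p v = 0"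
proof -
  have h1: "((\<lambda>q. FD (\<lambda>r. eta r w) q (xi q)) has_derivative
     (\<lambda>u. FD (\<lambda>r. eta r w) p (FD xi p u) + FD (\<lambda>q. FD (\<lambda>r. eta r w) q (xi p)) p u)) (at p)"
    by (rule apply_rule[OF openU p _ _ d_xi[OF p], where F="\<lambda>q. FD (\<lambda>r. eta r w) q"])
       (auto intro: lin_Deta d2_eta p)
  have h2: "((\<lambda>q. FD (\<lambda>r. eta r (xi q)) q w) has_derivative
     (\<lambda>u. FD (\<lambda>r. eta r (FD xi p u)) p w + FD (\<lambda>q. FD (\<lambda>r. eta r (xi p)) q w) p u)) (at p)"
    by (rule apply_rule[OF openU p _ _ d_xi[OF p], where F="\<lambda>q a. FD (\<lambda>r. eta r a) q w"])
       (auto intro: lin_Deta_arg d2_eta p)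
  have h: "((\<lambda>q. FD (\<lambda>r. eta r w) q (xi q) - FD (\<lambda>r. eta r (xi q)) q w) has_derivative
     (\<lambda>u. (FD (\<lambda>r. eta r w) p (FD xi p u) + FD (\<lambda>q. FD (\<lambda>r. eta r w) q (xi p)) p u)
       - (FD (\<lambda>r. eta r (FD xi p u)) p w + FD (\<lambda>q. FD (\<lambda>r. eta r (xi p)) q w) p u))) (at p)"
    by (rule has_derivative_diff[OF h1 h2])
  have z: "FD (\<lambda>q. FD (\<lambda>r. eta r w) q (xi q) - FD (\<lambda>r. eta r (xi q)) q w) p = (\<lambda>x. 0)"
    by (rule FD_const_zero[OF openU p, where c=0]) (use iota_zero in blast)
  have zz: "(\<lambda>u. (FD (\<lambda>r. eta r w) p (FD xi p u) + FD (\<lambda>q. FD (\<lambda>r. eta r w) q (xi p)) p u)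
       - (FD (\<lambda>r. eta r (FD xi p u)) p w + FD (\<lambda>q. FD (\<lambda>r. eta r (xi p)) q w) p u)) = (\<lambda>x. 0)"
    using z unfolding FD_eq[OF h] .
  have "(FD (\<lambda>r. eta r w) p (FD xi p v) + FD (\<lambda>q. FD (\<lambda>r. eta r w) q (xi p)) p v)
       - (FD (\<lambda>r. eta r (FD xi p v)) p w + FD (\<lambda>q. FD (\<lambda>r. eta r (xi p)) q w) p v) = 0"
    using fun_cong[OF zz, of v] by simp
  then show ?thesis by linarith
qed

lemma LOmega: assumes p: "p \<in> U"
  shows "FD (\<lambda>q. g q v (phi q w)) p (xi p) + g p (FD xi p v) (phi p w) + g p v (phi p (FD xi p w)) = 0"
proof -
  have loc: "FD (\<lambda>q. g q v (phi q w)) p = FD (\<lambda>q. (FD (\<lambda>r. eta r w) q v - FD (\<lambda>r. eta r v) q w) / 2) p"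
  proof (rule FD_local[OF openU p])
    fix q assume q: "q \<in> U"
    show "g q v (phi q w) = (FD (\<lambda>r. eta r w) q v - FD (\<lambda>r. eta r v) q w) / 2"
      using deta[OF q, of v w] unfolding ext_deriv1_def by simp
  qed
  have hd: "((\<lambda>q. (FD (\<lambda>r. eta r w) q v - FD (\<lambda>r. eta r v) q w) / 2) has_derivative
      (\<lambda>h. ((FD (\<lambda>q. FD (\<lambda>r. eta r w) q v) p h - FD (\<lambda>q. FD (\<lambda>r. eta r v) q w) p h) * 2
          - (FD (\<lambda>r. eta r w) p v - FD (\<lambda>r. eta r v) p w) * 0) / (2 * 2))) (at p)"
    by (rule has_derivative_divide'[OF has_derivative_diff[OF FD_works[OF d2_eta[OF p]] FD_works[OF d2_eta[OF p]]] has_derivative_const]) simp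
  have e0: "FD (\<lambda>q. g q v (phi q w)) p (xi p)
     = (FD (\<lambda>q. FD (\<lambda>r. eta r w) q v) p (xi p) - FD (\<lambda>q. FD (\<lambda>r. eta r v) q w) p (xi p)) / 2"
    unfolding loc FD_eq[OF hd] by simp
  have s1: "FD (\<lambda>q. FD (\<lambda>r. eta r w) q v) p (xi p) = FD (\<lambda>q. FD (\<lambda>r. eta r w) q (xi p)) p v"
    using schwarz[OF openU p sm_eta, of w v "xi p"] .
  have s2: "FD (\<lambda>q. FD (\<lambda>r. eta r v) q w) p (xi p) = FD (\<lambda>q. FD (\<lambda>r. eta r v) q (xi p)) p w"
    using schwarz[OF openU p sm_eta, of v w "xi p"] .
  have s3: "FD (\<lambda>q. FD (\<lambda>r. eta r (xi p)) q w) p v = FD (\<lambda>q. FD (\<lambda>r. eta r (xi p)) q v) p w"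
    using schwarz[OF openU p sm_eta, of "xi p" w v] .
  have e1: "g p (FD xi p v) (phi p w) = (FD (\<lambda>r. eta r w) p (FD xi p v) - FD (\<lambda>r. eta r (FD xi p v)) p w) / 2"
    using deta[OF p, of "FD xi p v" w] unfolding ext_deriv1_def by simp
  have e2: "g p v (phi p (FD xi p w)) = (FD (\<lambda>r. eta r (FD xi p w)) p v - FD (\<lambda>r. eta r v) p (FD xi p w)) / 2"
    using deta[OF p, of v "FD xi p w"] unfolding ext_deriv1_def by simp
  have S: "(FD (\<lambda>q. FD (\<lambda>r. eta r w) q v) p (xi p) - FD (\<lambda>q. FD (\<lambda>r. eta r v) q w) p (xi p))
     + (FD (\<lambda>r. eta r w) p (FD xi p v) - FD (\<lambda>r. eta r (FD xi p v)) p w)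
     + (FD (\<lambda>r. eta r (FD xi p w)) p v - FD (\<lambda>r. eta r v) p (FD xi p w)) = 0"
    using eqn[OF p, of w v] eqn[OF p, of v w] unfolding s1 s2 s3 by linarith
  show ?thesis unfolding e0 e1 e2 using S by (simp add: add_divide_distrib[symmetric])
qed

lemma LOmega2: assumes p: "p \<in> U"
  shows "g p (A p v) (phi p w) + g p v (A p (phi p w)) + g p v (Lie phi p w) = 0"
proof -
  have "FD (\<lambda>q. g q v (phi q w)) p (xi p) = g p v (FD (\<lambda>q. phi q w) p (xi p)) + FD (\<lambda>q. g q v (phi p w)) p (xi p)"
    by (rule apply_rule_FD[OF openU p _ _ d_phi[OF p]]) (auto intro: lin_g2 d_g p)
  moreover have "FD (\<lambda>q. g q v (phi p w)) p (xi p) + g p (FD xi p v) (phi p w) + g p v (FD xi p (phi p w))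
     = g p (A p v) (phi p w) + g p v (A p (phi p w))" by (rule Lg[OF p])
  moreover have "g p v (Lie phi p w) = g p v (FD (\<lambda>q. phi q w) p (xi p)) - g p v (FD xi p (phi p w)) + g p v (phi p (FD xi p w))"
    unfolding Lie_def using linear_add[OF lin_g2[OF p]] linear_diff[OF lin_g2[OF p]] by simp
  ultimately show ?thesis using LOmega[OF p, of v w] by linarith
qed

end

context cms begin

lemma compat: assumes p: "p \<in> U"
  shows "g p (phi p x) (phi p y) = g p x y - eta p x * eta p y"
proof -
  have "g p (phi p x) (phi p y) = - g p y (phi p (phi p x))" by (rule phi_skew[OF p])
  also have "\<dots> = - g p y (- x + eta p x *\<^sub>R xi p)" using phi2[OF p] by simp
  also have "\<dots> = g p y x - eta p x * g p y (xi p)"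
    using linear_add[OF lin_g2[OF p]] linear_neg[OF lin_g2[OF p]] linear_scale[OF lin_g2[OF p]] linear_diff[OF lin_g2[OF p]] by simp
  also have "\<dots> = g p x y - eta p x * eta p y" using g_sym[OF p] eta_g[OF p] by simp
  finally show ?thesis .
qed

lemma lin_Lie_phi: assumes p: "p \<in> U" shows "linear (Lie phi p)"
proof -
  have "linear (\<lambda>v. FD (\<lambda>q. phi q v) p (xi p) - FD xi p (phi p v) + phi p (FD xi p v))"
    by (intro linear_compose_add linear_compose_sub lin_Dphi_arg[OF p]
          linear_compose[OF lin_phi[OF p] lin_Dxi[OF p], unfolded comp_def]
          linear_compose[OF lin_Dxi[OF p] lin_phi[OF p], unfolded comp_def])
  then show ?thesis unfolding Lie_def .
qed

lemma eta_Lphi: assumes p: "p \<in> U" shows "eta p (Lie phi p v) = 0"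
  by (rule eta_Lie[OF p _ d_phi[OF p] lin_phi[OF p]]) (rule eta_phi)

abbreviation Hf :: "'a \<Rightarrow> 'a \<Rightarrow> 'a" where "Hf \<equiv> h_tensor xi phi"

lemma Hf_eq: assumes p: "p \<in> U" shows "Hf p v = (1/2) *\<^sub>R Lie phi p v"
  unfolding h_tensor_def using lie_eq[where T=phi, OF lin_phi[OF p]] by simp

lemma lin_Hf: assumes p: "p \<in> U" shows "linear (Hf p)"
proof -
  have "Hf p = (\<lambda>v. (1/2) *\<^sub>R Lie phi p v)" using Hf_eq[OF p] by auto
  then show ?thesis using linear_compose_scale_right[OF lin_Lie_phi[OF p]] by simp
qed

lemma SS: assumes p: "p \<in> U" shows "g p (phi p x) (Lie phi p u) = g p (phi p u) (Lie phi p x)"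
proof -
  have "g p (A p (phi p x)) (phi p u) + g p (phi p x) (A p (phi p u)) + g p (phi p x) (Lie phi p u) = 0" by (rule LOmega2[OF p])
  moreover have "g p (A p (phi p u)) (phi p x) + g p (phi p u) (A p (phi p x)) + g p (phi p u) (Lie phi p x) = 0" by (rule LOmega2[OF p])
  moreover have "g p (A p (phi p x)) (phi p u) = g p (phi p u) (A p (phi p x))" by (rule g_sym[OF p])
  moreover have "g p (phi p x) (A p (phi p u)) = g p (A p (phi p u)) (phi p x)" by (rule g_sym[OF p])
  ultimately show ?thesis by linarith
qed

lemma T3: assumes p: "p \<in> U" shows "g p v (phi p (Lie phi p w)) = g p (phi p (Lie phi p v)) w"
proof -
  let ?L = "Lie phi p"
  have "g p v (phi p (?L w)) = - g p (?L w) (phi p v)" by (rule phi_skew[OF p])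
  also have "\<dots> = - g p (phi p v) (?L w)" using g_sym[OF p] by simp
  also have "\<dots> = - g p (phi p w) (?L v)" using SS[OF p] by simp
  also have "\<dots> = - g p (?L v) (phi p w)" using g_sym[OF p] by simp
  also have "\<dots> = g p w (phi p (?L v))" using phi_skew[OF p, of "?L v" w] by simp
  also have "\<dots> = g p (phi p (?L v)) w" by (rule g_sym[OF p])
  finally show ?thesis .
qed

lemma A_formula: assumes p: "p \<in> U" shows "A p v = - phi p v - phi p (Hf p v)"
proof -
  let ?L = "Lie phi p"
  have S1: "g p (A p v) (phi p u) = g p v (phi p (phi p u)) - (1/2) * g p v (?L u)" for v u
  proof -
    have "g p (phi p u) (A p v) - g p v (A p (phi p u)) = 2 * g p v (phi p (phi p u))" by (rule A_skew[OF p])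
    moreover have "g p (A p v) (phi p u) + g p v (A p (phi p u)) + g p v (?L u) = 0" by (rule LOmega2[OF p])
    moreover have "g p (phi p u) (A p v) = g p (A p v) (phi p u)" by (rule g_sym[OF p])
    ultimately show ?thesis by linarith
  qed
  note T3 = T3[OF p]
  have gAw: "g p (A p v) w = g p (- phi p v - phi p (Hf p v)) w" for w
  proof -
    have dec: "w = eta p w *\<^sub>R xi p - phi p (phi p w)" using phi2[OF p, of w] by simp
    have "g p (A p v) w = g p (A p v) (eta p w *\<^sub>R xi p - phi p (phi p w))"
      using arg_cong[OF dec, of "g p (A p v)"] .
    also have "\<dots> = eta p w * g p (A p v) (xi p) - g p (A p v) (phi p (phi p w))"
      using linear_diff[OF lin_g2[OF p]] linear_scale[OF lin_g2[OF p]] by simp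
    also have "\<dots> = - g p (A p v) (phi p (phi p w))" using A_xi_perp[OF p] by simp
    also have "\<dots> = - (g p v (phi p (phi p (phi p w))) - (1/2) * g p v (?L (phi p w)))" using S1 by simp
    finally have e1: "g p (A p v) w = - (g p v (phi p (phi p (phi p w))) - (1/2) * g p v (?L (phi p w)))" .
    have e2: "phi p (phi p (phi p w)) = - phi p w" using phi2[OF p, of "phi p w"] eta_phi[OF p] by simp
    have e3: "?L (phi p w) = - phi p (?L w)" using Lie_phi2[OF p, of w] by (simp add: eq_neg_iff_add_eq_0)
    have "g p (A p v) w = g p v (phi p w) - (1/2) * g p v (phi p (?L w))"
      unfolding e1 e2 e3 using linear_neg[OF lin_g2[OF p]] by simp
    also have "\<dots> = - g p (phi p v) w - (1/2) * g p (phi p (?L v)) w"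
      using phi_skew[OF p, of v w] g_sym[OF p, of w "phi p v"] T3[of v w] by simp
    also have "\<dots> = g p (- phi p v - phi p (Hf p v)) w"
    proof -
      have "phi p (Hf p v) = (1/2) *\<^sub>R phi p (?L v)" using Hf_eq[OF p] linear_scale[OF lin_phi[OF p]] by simp
      then show ?thesis
        using linear_diff[OF lin_g1[OF p]] linear_neg[OF lin_g1[OF p]] linear_scale[OF lin_g1[OF p]] by simp
    qed
    finally show ?thesis .
  qed
  show ?thesis by (rule g_zero[OF p]) (rule gAw)
qed

lemma H_anti: assumes p: "p \<in> U" shows "Hf p (phi p v) = - phi p (Hf p v)"
proof -
  have e3: "Lie phi p (phi p v) = - phi p (Lie phi p v)" using Lie_phi2[OF p, of v] by (simp add: eq_neg_iff_add_eq_0)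
  show ?thesis unfolding Hf_eq[OF p] e3 using linear_scale[OF lin_phi[OF p]] by simp
qed

lemma eta_H: assumes p: "p \<in> U" shows "eta p (Hf p v) = 0"
  using Hf_eq[OF p] eta_Lphi[OF p] linear_scale[OF lin_eta[OF p]] by simp

lemma H_xi: assumes p: "p \<in> U" shows "Hf p (xi p) = 0"
  using Hf_eq[OF p] Lie_phi_xi[OF p] by simp

lemma H_sym: assumes p: "p \<in> U" shows "g p (Hf p c) w = g p c (Hf p w)"
proof -
  let ?L = "Lie phi p"
  have Lphi: "?L (phi p c) = - phi p (?L c)" using Lie_phi2[OF p, of c] by (simp add: eq_neg_iff_add_eq_0)
  have "g p (phi p c) (phi p (?L w)) = g p (phi p (?L (phi p c))) w" by (rule T3[OF p])
  moreover have "g p (phi p c) (phi p (?L w)) = g p c (?L w)"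
    using compat[OF p] eta_Lphi[OF p] by simp
  moreover have "g p (phi p (?L (phi p c))) w = g p (?L c) w"
  proof -
    have "phi p (?L (phi p c)) = - phi p (phi p (?L c))" using Lphi linear_neg[OF lin_phi[OF p]] by simp
    also have "\<dots> = ?L c" using phi2[OF p, of "?L c"] eta_Lphi[OF p] by simp
    finally show ?thesis by simp
  qed
  ultimately have X: "g p (?L c) w = g p c (?L w)" by simp
  show ?thesis using X Hf_eq[OF p] linear_scale[OF lin_g1[OF p]] linear_scale[OF lin_g2[OF p]] by simp
qed

end

context cms begin

lemma d_Lie_phi: assumes p: "p \<in> U" shows "(\<lambda>q. Lie phi q v) differentiable (at p)"
proof -
  have t1: "(\<lambda>q. FD (\<lambda>r. phi r v) q (xi q)) differentiable (at p)"
    by (rule apply_rule_diff[OF openU p _ _ d_xi[OF p], where F="\<lambda>q. FD (\<lambda>r. phi r v) q"])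
       (auto intro: lin_Dphi d2_phi p)
  have t2: "(\<lambda>q. FD xi q (phi q v)) differentiable (at p)"
    by (rule apply_rule_diff[OF openU p _ _ d_phi[OF p], where F="\<lambda>q. FD xi q"])
       (auto intro: lin_Dxi d2_xi p)
  have t3: "(\<lambda>q. phi q (FD xi q v)) differentiable (at p)"
    by (rule apply_rule_diff[OF openU p _ _ d2_xi[OF p], where F="phi"])
       (auto intro: lin_phi d_phi p)
  show ?thesis unfolding Lie_def by (intro differentiable_add differentiable_diff t1 t2 t3)
qed

lemma d_Hf: assumes p: "p \<in> U" shows "(\<lambda>q. Hf q v) differentiable (at p)"
proof (rule diff_local[OF openU p])
  show "(\<lambda>q. (1/2) *\<^sub>R Lie phi q v) differentiable (at p)"
    by (intro differentiable_scaleR differentiable_const d_Lie_phi[OF p])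
  show "\<And>q. q \<in> U \<Longrightarrow> (1/2) *\<^sub>R Lie phi q v = Hf q v" using Hf_eq by simp
qed

lemma Lie_neg: assumes dT: "(\<lambda>q. T q v) differentiable (at p)" and linT: "linear (T p)"
    and lx: "linear (FD xi p)"
  shows "Lie (\<lambda>q w. - T q w) p v = - Lie T p v"
proof -
  have "FD (\<lambda>q. - T q v) p = (\<lambda>u. - FD (\<lambda>q. T q v) p u)"
    by (rule FD_eq[OF has_derivative_minus[OF FD_works[OF dT]]])
  then show ?thesis unfolding Lie_def using linear_neg[OF lx] by simp
qed

lemma Lie_diff: assumes dS: "(\<lambda>q. S q v) differentiable (at p)" and dT: "(\<lambda>q. T q v) differentiable (at p)"
    and lx: "linear (FD xi p)"
  shows "Lie (\<lambda>q w. S q w - T q w) p v = Lie S p v - Lie T p v"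
proof -
  have "FD (\<lambda>q. S q v - T q v) p = (\<lambda>u. FD (\<lambda>q. S q v) p u - FD (\<lambda>q. T q v) p u)"
    by (rule FD_eq[OF has_derivative_diff[OF FD_works[OF dS] FD_works[OF dT]]])
  then show ?thesis unfolding Lie_def using linear_diff[OF lx] by (simp add: algebra_simps)
qed

lemma Lie_scale: assumes dT: "(\<lambda>q. T q v) differentiable (at p)" and lx: "linear (FD xi p)"
  shows "Lie (\<lambda>q w. c *\<^sub>R T q w) p v = c *\<^sub>R Lie T p v"
proof -
  have "FD (\<lambda>q. c *\<^sub>R T q v) p = (\<lambda>u. c *\<^sub>R FD (\<lambda>q. T q v) p u)"
    by (rule FD_eq[OF has_derivative_scaleR_right[OF FD_works[OF dT]]])
  then show ?thesis unfolding Lie_def using linear_scale[OF lx] by (simp add: algebra_simps)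
qed

lemma Gam_zero: assumes p: "p \<in> U" shows "christoffel g p v 0 = 0"
proof (rule g_zero[OF p])
  fix z
  have a: "FD (\<lambda>q. g q 0 z) p = (\<lambda>x. 0)"
    by (rule FD_const_zero[OF openU p, where c=0]) (use linear_0[OF lin_g1] in simp)
  have b: "FD (\<lambda>q. g q v 0) p = (\<lambda>x. 0)"
    by (rule FD_const_zero[OF openU p, where c=0]) (use linear_0[OF lin_g2] in simp)
  have c: "FD (\<lambda>q. g q v z) p 0 = 0" using linear_0[OF lin_Dg[OF p]] by simp
  have "g p 0 z = 0" using linear_0[OF lin_g1[OF p]] by simp
  then show "g p (christoffel g p v 0) z = g p 0 z"
    unfolding Gam_prop[OF p] K_def a b c by simp
qed

lemma curv: assumes p: "p \<in> U" shows "curvature g (\<lambda>q. v) xi xi p = - Lie A p v - A p (A p v)"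
proof -
  have z: "FD (levi_civita g xi xi) p = (\<lambda>x. 0)"
    by (rule FD_const_zero[OF openU p, where c=0])
       (simp add: levi_civita_nab A_xi[unfolded A_def])
  have t1: "levi_civita g (\<lambda>q. v) (levi_civita g xi xi) p = 0"
    unfolding levi_civita_nab[of "\<lambda>q. v"] nab_def z
    using A_xi[OF p] Gam_zero[OF p] by (simp add: levi_civita_nab A_def)
  have t2: "levi_civita g xi (levi_civita g (\<lambda>q. v) xi) p = FD (\<lambda>q. A q v) p (xi p) + christoffel g p (xi p) (A p v)"
  proof -
    have lf: "levi_civita g (\<lambda>q. v) xi = (\<lambda>q. A q v)" by (rule ext) (simp add: levi_civita_nab A_def)
    show ?thesis unfolding levi_civita_nab[of xi] nab_def lf by simp
  qed
  have lb: "lie_bracket (\<lambda>q. v) xi p = FD xi p v"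
    unfolding lie_bracket_def dir_deriv_def FD_const_fun by simp
  have t3: "levi_civita g (lie_bracket (\<lambda>q. v) xi) xi p = A p (FD xi p v)"
    unfolding levi_civita_nab lb A_def by simp
  have gs: "christoffel g p (xi p) (A p v) = A p (A p v) - FD xi p (A p v)"
    using Gam_sym[OF p, of "xi p" "A p v"] unfolding A_def nab_def by simp
  show ?thesis unfolding curvature_def t1 t2 t3 gs Lie_def by (simp add: algebra_simps)
qed

end

context cms begin

lemma d_phiH: assumes p: "p \<in> U" shows "(\<lambda>q. phi q (Hf q v)) differentiable (at p)"
  by (rule apply_rule_diff[OF openU p _ _ d_Hf[OF p], where F=phi]) (auto intro: lin_phi d_phi p)

lemma d_Hphi: assumes p: "p \<in> U" shows "(\<lambda>q. Hf q (phi q v)) differentiable (at p)"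
  by (rule apply_rule_diff[OF openU p _ _ d_phi[OF p], where F=Hf]) (auto intro: lin_Hf d_Hf p)

lemma Lie_phi_eq: assumes p: "p \<in> U" shows "Lie phi p x = 2 *\<^sub>R Hf p x"
  using Hf_eq[OF p, of x] by simp

lemma Lie_A: assumes p: "p \<in> U"
  shows "Lie A p v = - 2 *\<^sub>R Hf p v - 2 *\<^sub>R Hf p (Hf p v) - phi p (Lie Hf p v)"
proof -
  have "Lie A p v = Lie (\<lambda>q w. - phi q w - phi q (Hf q w)) p v"
    by (rule Lie_local[OF p]) (rule A_formula)
  also have "\<dots> = Lie (\<lambda>q w. - phi q w) p v - Lie (\<lambda>q w. phi q (Hf q w)) p v"
    by (rule Lie_diff[OF differentiable_minus[OF d_phi[OF p]] d_phiH[OF p] lin_Dxi[OF p]])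
  also have "Lie (\<lambda>q w. - phi q w) p v = - Lie phi p v"
    by (rule Lie_neg[OF d_phi[OF p] lin_phi[OF p] lin_Dxi[OF p]])
  also have "Lie (\<lambda>q w. phi q (Hf q w)) p v = Lie phi p (Hf p v) + phi p (Lie Hf p v)"
    by (rule Lie_comp[OF p]) (auto intro: lin_phi d_phi d_Hf lin_Hf p)
  finally show ?thesis unfolding Lie_phi_eq[OF p] by (simp add: algebra_simps)
qed

lemma eta_LH: assumes p: "p \<in> U" shows "eta p (Lie Hf p v) = 0"
  by (rule eta_Lie[OF p _ d_Hf[OF p] lin_Hf[OF p]]) (rule eta_H)

lemma LH_anti: assumes p: "p \<in> U"
  shows "Lie Hf p (phi p v) + phi p (Lie Hf p v) = - (2 *\<^sub>R Hf p (Hf p v) + 2 *\<^sub>R Hf p (Hf p v))"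
proof -
  have a: "Lie (\<lambda>q w. Hf q (phi q w)) p v = Lie Hf p (phi p v) + Hf p (Lie phi p v)"
    by (rule Lie_comp[OF p]) (auto intro: lin_phi d_phi d_Hf lin_Hf p)
  have b: "Lie (\<lambda>q w. phi q (Hf q w)) p v = Lie phi p (Hf p v) + phi p (Lie Hf p v)"
    by (rule Lie_comp[OF p]) (auto intro: lin_phi d_phi d_Hf lin_Hf p)
  have c: "Lie (\<lambda>q w. Hf q (phi q w)) p v = Lie (\<lambda>q w. - phi q (Hf q w)) p v"
    by (rule Lie_local[OF p]) (rule H_anti)
  have lin: "linear (\<lambda>w. phi p (Hf p w))"
    using linear_compose[OF lin_Hf[OF p] lin_phi[OF p]] by (simp add: comp_def)
  have d: "Lie (\<lambda>q w. - phi q (Hf q w)) p v = - Lie (\<lambda>q w. phi q (Hf q w)) p v"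
    by (rule Lie_neg[OF d_phiH[OF p] lin lin_Dxi[OF p]])
  have "Lie Hf p (phi p v) + Hf p (Lie phi p v) = - (Lie phi p (Hf p v) + phi p (Lie Hf p v))"
    using a b c d by simp
  then have E: "Lie Hf p (phi p v) + 2 *\<^sub>R Hf p (Hf p v) = - (2 *\<^sub>R Hf p (Hf p v) + phi p (Lie Hf p v))"
    unfolding Lie_phi_eq[OF p] using linear_scale[OF lin_Hf[OF p]] by simp
  have X: "Lie Hf p (phi p v) = - (2 *\<^sub>R Hf p (Hf p v) + phi p (Lie Hf p v)) - 2 *\<^sub>R Hf p (Hf p v)"
    using E by (simp add: eq_diff_eq)
  show ?thesis unfolding X by (simp add: algebra_simps)
qed

end

lemma solve1: "(X::'a::real_vector) = - (a *\<^sub>R A - B - Y) - D \<Longrightarrow> Y = X + a *\<^sub>R A - B + D"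
  by (simp add: algebra_simps)

lemma solveH:
  assumes "(A::'a::real_vector) - M - h + (A + M - h) = - (2 *\<^sub>R h + 2 *\<^sub>R h)"
  shows "h = - A"
proof -
  have "2 *\<^sub>R (A + h) = (A - M - h + (A + M - h)) + (2 *\<^sub>R h + 2 *\<^sub>R h)"
    by (simp add: algebra_simps scaleR_2)
  also have "\<dots> = 0" using assms by simp
  finally have "A + h = 0" by simp
  then show ?thesis by (simp add: eq_neg_iff_add_eq_0 add.commute)
qed

lemma alg1:
  fixes P H L Am :: "'a::real_vector \<Rightarrow> 'a" and e :: "'a \<Rightarrow> real" and x :: 'a and k m :: real
  assumes lP: "linear P" and lH: "linear H"
    and PP: "\<And>v. P (P v) = - v + e v *\<^sub>R x" and Px: "P x = 0" and eP: "\<And>v. e (P v) = 0"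
    and HP: "\<And>v. H (P v) = - P (H v)" and eH: "\<And>v. e (H v) = 0"
    and eL: "\<And>v. e (L v) = 0"
    and LP: "\<And>v. L (P v) + P (L v) = - (2 *\<^sub>R H (H v) + 2 *\<^sub>R H (H v))"
    and C: "\<And>v. k *\<^sub>R (v - e v *\<^sub>R x) + m *\<^sub>R H v
              = - (- 2 *\<^sub>R H v - 2 *\<^sub>R H (H v) - P (L v)) - Am (Am v)"
    and Am: "\<And>v. Am v = - P v - P (H v)"
  shows "H (H v) = (k - 1) *\<^sub>R P (P v) \<and> L v = (2 - m) *\<^sub>R P (H v) + (2 * (1 - k)) *\<^sub>R P v"
proof -
  note lin = linear_add[OF lP] linear_diff[OF lP] linear_neg[OF lP] linear_scale[OF lP]
             linear_add[OF lH] linear_diff[OF lH] linear_neg[OF lH] linear_scale[OF lH]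
  have AA: "Am (Am w) = P (P w) + H (H w)" for w
    unfolding Am by (simp add: PP Px eH HP lin algebra_simps)
  have B0: "P (L w) = (k *\<^sub>R (w - e w *\<^sub>R x) + m *\<^sub>R H w) + (- 2) *\<^sub>R H w - 2 *\<^sub>R H (H w) + Am (Am w)" for w
    by (rule solve1[OF C])
  have B: "P (L w) = (k - 1) *\<^sub>R (w - e w *\<^sub>R x) + (m - 2) *\<^sub>R H w - H (H w)" for w
    unfolding B0 AA PP by (simp add: algebra_simps scaleR_2)
  have Lf: "L w = - P (P (L w))" for w using PP[of "L w"] eL[of w] by simp
  have L1: "L w = - P ((k - 1) *\<^sub>R (w - e w *\<^sub>R x) + (m - 2) *\<^sub>R H w - H (H w))" for w
    using Lf[of w] unfolding B .
  have Lform: "L w = (1 - k) *\<^sub>R P w + (2 - m) *\<^sub>R P (H w) + P (H (H w))" for w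
    unfolding L1 by (simp add: lin Px algebra_simps)
  have a: "L (P w) = (k - 1) *\<^sub>R (w - e w *\<^sub>R x) - (m - 2) *\<^sub>R H w - H (H w)" for w
    unfolding Lform[of "P w"] by (simp add: PP Px eH HP lin algebra_simps)
  have HH0: "H (H w) = - ((k - 1) *\<^sub>R (w - e w *\<^sub>R x))" for w
    by (rule solveH[where M="(m - 2) *\<^sub>R H w"]) (use LP[of w] in \<open>simp only: a B\<close>)
  have HH: "H (H w) = (k - 1) *\<^sub>R P (P w)" for w
    unfolding HH0 PP by (simp add: algebra_simps)
  have c2: "(2 * (1 - k)) *\<^sub>R P v = (1 - k) *\<^sub>R P v + (1 - k) *\<^sub>R P v"
    using scaleR_left_distrib[of "1 - k" "1 - k" "P v"] by simp
  have "L v = (1 - k) *\<^sub>R P v + (2 - m) *\<^sub>R P (H v) + (k - 1) *\<^sub>R P (P (P v))"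
    using Lform[of v] unfolding HH[of v] lin .
  also have "\<dots> = (2 - m) *\<^sub>R P (H v) + (2 * (1 - k)) *\<^sub>R P v"
    unfolding c2 PP by (simp add: eP Px lin algebra_simps)
  finally show ?thesis using HH by simp
qed


lemma alg2:
  fixes P H ht :: "'a::real_vector \<Rightarrow> 'a" and e :: "'a \<Rightarrow> real" and x :: 'a and a b c d :: real
  assumes lP: "linear P" and lH: "linear H"
    and PP: "\<And>v. P (P v) = - v + e v *\<^sub>R x" and Px: "P x = 0" and eP: "\<And>v. e (P v) = 0"
    and HP: "\<And>v. H (P v) = - P (H v)" and eH: "\<And>v. e (H v) = 0"
    and HH: "\<And>v. H (H v) = d *\<^sub>R P (P v)"
    and ht: "\<And>w. ht w = c *\<^sub>R (a *\<^sub>R P (H w) + b *\<^sub>R P w)"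
  shows "ht (ht v) = (c * c * (a * a * d + b * b)) *\<^sub>R P (P v)"
proof -
  note lin = linear_add[OF lP] linear_neg[OF lP] linear_scale[OF lP]
             linear_add[OF lH] linear_neg[OF lH] linear_scale[OF lH]
  have PPv: "P (P (P (P v))) = - P (P v)" using PP[of "P (P v)"] eP[of "P v"] by simp
  have PPH: "P (P (H w)) = - H w" for w using PP[of "H w"] eH[of w] by simp
  have "ht (ht v) = (c * c * (a * a * d)) *\<^sub>R P (P v) + (c * c * (b * b)) *\<^sub>R P (P v)"
    unfolding ht by (simp only: lin HP HH PPv PPH scaleR_scaleR) (simp add: algebra_simps)
  also have "\<dots> = (c * c * (a * a * d + b * b)) *\<^sub>R P (P v)"
    by (simp only: scaleR_left_distrib[symmetric] distrib_left)
  finally show ?thesis .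
qed

lemma scal:
  fixes k m s :: real
  assumes k: "k < 1" and s: "s = sqrt (1 - k)"
  shows "(1 / (2 * s)) * (1 / (2 * s)) * ((2 - m) * (2 - m) * (k - 1) + (2 * (1 - k)) * (2 * (1 - k)))
       = (1 - k) - (1 - m / 2)\<^sup>2"
proof -
  have s2: "s * s = 1 - k" using s k by (simp add: real_sqrt_mult_self)
  have sp: "s > 0" using s k by simp
  have c: "(1 / (2 * s)) * (1 / (2 * s)) = 1 / (4 * (1 - k))" using s2 sp by (simp add: field_simps)
  have e: "(2 - m) * (2 - m) * (k - 1) + (2 * (1 - k)) * (2 * (1 - k)) = (1 - k) * (4 * (1 - k) - (2 - m) * (2 - m))"
    by (simp add: algebra_simps)
  have "1 / (4 * (1 - k)) * ((1 - k) * (4 * (1 - k) - (2 - m) * (2 - m))) = (4 * (1 - k) - (2 - m) * (2 - m)) / 4"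
    using k by (simp add: field_simps)
  also have "\<dots> = (1 - k) - (1 - m / 2)\<^sup>2" by (simp add: power2_eq_square field_simps)
  finally show ?thesis unfolding c e .
qed

theorem lemma2:
  fixes U :: "'a::euclidean_space set"
    and eta :: "'a \<Rightarrow> 'a \<Rightarrow> real" and xi :: "'a \<Rightarrow> 'a"
    and phi :: "'a \<Rightarrow> 'a \<Rightarrow> 'a" and g :: "'a \<Rightarrow> 'a \<Rightarrow> 'a \<Rightarrow> real"
    and \<kappa> \<mu> :: real
  assumes cm: "contact_metric_on U eta xi phi g"
    and non_K: "\<exists>p\<in>U. \<exists>v. h_tensor xi phi p v \<noteq> 0"
    and kmu: "\<And>X p. smooth_on U X \<Longrightarrow> p \<in> U \<Longrightarrow>
        curvature g X xi xi p = \<kappa> *\<^sub>R (X p - eta p (X p) *\<^sub>R xi p) + \<mu> *\<^sub>R h_tensor xi phi p (X p)"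
  shows "\<kappa> < 1 \<and>
    (\<forall>p\<in>U. \<forall>v.
      (1 / 2) *\<^sub>R lie_deriv_endo xi (\<lambda>q w. (1 / sqrt (1 - \<kappa>)) *\<^sub>R h_tensor xi phi q w) p v
        = (1 / (2 * sqrt (1 - \<kappa>))) *\<^sub>R
            ((2 - \<mu>) *\<^sub>R phi p (h_tensor xi phi p v) + (2 * (1 - \<kappa>)) *\<^sub>R phi p v)) \<and>
    (\<forall>p\<in>U. \<forall>v.
      (let ht = (\<lambda>w. (1 / 2) *\<^sub>R lie_deriv_endo xi (\<lambda>q w. (1 / sqrt (1 - \<kappa>)) *\<^sub>R h_tensor xi phi q w) p w)
       in ht (ht v) = ((1 - \<kappa>) - (1 - \<mu> / 2)\<^sup>2) *\<^sub>R phi p (phi p v)))"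
proof -
  interpret cms U eta xi phi g by (rule cms.intro[OF cm])
  have key: "Hf p (Hf p v) = (\<kappa> - 1) *\<^sub>R phi p (phi p v) \<and>
     Lie Hf p v = (2 - \<mu>) *\<^sub>R phi p (Hf p v) + (2 * (1 - \<kappa>)) *\<^sub>R phi p v" if p: "p \<in> U" for p v
  proof (rule alg1[where e="eta p" and x="xi p" and Am="A p"])
    show "linear (phi p)" by (rule lin_phi[OF p])
    show "linear (Hf p)" by (rule lin_Hf[OF p])
    show "\<And>v. phi p (phi p v) = - v + eta p v *\<^sub>R xi p" by (rule phi2[OF p])
    show "phi p (xi p) = 0" by (rule phi_xi[OF p])
    show "\<And>v. eta p (phi p v) = 0" by (rule eta_phi[OF p])
    show "\<And>v. Hf p (phi p v) = - phi p (Hf p v)" by (rule H_anti[OF p])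
    show "\<And>v. eta p (Hf p v) = 0" by (rule eta_H[OF p])
    show "\<And>v. eta p (Lie Hf p v) = 0" by (rule eta_LH[OF p])
    show "\<And>v. Lie Hf p (phi p v) + phi p (Lie Hf p v) = - (2 *\<^sub>R Hf p (Hf p v) + 2 *\<^sub>R Hf p (Hf p v))"
      by (rule LH_anti[OF p])
    show "\<And>v. A p v = - phi p v - phi p (Hf p v)" by (rule A_formula[OF p])
    show "\<kappa> *\<^sub>R (w - eta p w *\<^sub>R xi p) + \<mu> *\<^sub>R Hf p w =
          - (- 2 *\<^sub>R Hf p w - 2 *\<^sub>R Hf p (Hf p w) - phi p (Lie Hf p w)) - A p (A p w)" for w
    proof -
      have "curvature g (\<lambda>q. w) xi xi p = \<kappa> *\<^sub>R (w - eta p w *\<^sub>R xi p) + \<mu> *\<^sub>R Hf p w"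
        using kmu[OF smooth_const p] by simp
      moreover have "curvature g (\<lambda>q. w) xi xi p = - Lie A p w - A p (A p w)" by (rule curv[OF p])
      ultimately show ?thesis unfolding Lie_A[OF p] by simp
    qed
  qed
  have gnn: "g p y y \<ge> 0" if p: "p \<in> U" for p y
    using g_pos[OF p, of y] linear_0[OF lin_g1[OF p]] by (cases "y = 0") auto
  have k1: "\<kappa> < 1"
  proof (rule ccontr)
    assume "\<not> \<kappa> < 1"
    then have kk: "\<kappa> - 1 \<ge> 0" by simp
    obtain p v where p: "p \<in> U" and hv: "Hf p v \<noteq> 0" using non_K by blast
    have "g p (Hf p v) (Hf p v) = g p v (Hf p (Hf p v))" by (rule H_sym[OF p])
    also have "\<dots> = (\<kappa> - 1) * g p v (phi p (phi p v))"
      using key[OF p, of v] linear_scale[OF lin_g2[OF p]] by simp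
    also have "\<dots> = - ((\<kappa> - 1) * g p (phi p v) (phi p v))"
      using phi_skew[OF p, of v "phi p v"] by simp
    also have "\<dots> \<le> 0" using kk gnn[OF p, of "phi p v"] by simp
    finally show False using g_pos[OF p hv] by simp
  qed
  define s where "s = sqrt (1 - \<kappa>)"
  have sp: "s > 0" unfolding s_def using k1 by simp
  have c2: "(1 / 2) *\<^sub>R lie_deriv_endo xi (\<lambda>q w. (1 / sqrt (1 - \<kappa>)) *\<^sub>R h_tensor xi phi q w) p v
        = (1 / (2 * sqrt (1 - \<kappa>))) *\<^sub>R
            ((2 - \<mu>) *\<^sub>R phi p (h_tensor xi phi p v) + (2 * (1 - \<kappa>)) *\<^sub>R phi p v)"
    if p: "p \<in> U" for p v
  proof -
    have lin: "linear ((\<lambda>q w. (1 / sqrt (1 - \<kappa>)) *\<^sub>R Hf q w) p)"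
      using linear_compose_scale_right[OF lin_Hf[OF p]] by simp
    have "lie_deriv_endo xi (\<lambda>q w. (1 / sqrt (1 - \<kappa>)) *\<^sub>R Hf q w) p v
        = Lie (\<lambda>q w. (1 / sqrt (1 - \<kappa>)) *\<^sub>R Hf q w) p v" by (rule lie_eq[where T="\<lambda>q w. (1 / sqrt (1 - \<kappa>)) *\<^sub>R Hf q w", OF lin])
    also have "\<dots> = (1 / sqrt (1 - \<kappa>)) *\<^sub>R Lie Hf p v"
      by (rule Lie_scale[OF d_Hf[OF p] lin_Dxi[OF p]])
    finally show ?thesis using key[OF p, of v] by simp
  qed
  have c3: "(let ht = (\<lambda>w. (1 / 2) *\<^sub>R lie_deriv_endo xi (\<lambda>q w. (1 / sqrt (1 - \<kappa>)) *\<^sub>R h_tensor xi phi q w) p w)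
       in ht (ht v) = ((1 - \<kappa>) - (1 - \<mu> / 2)\<^sup>2) *\<^sub>R phi p (phi p v))" if p: "p \<in> U" for p v
  proof -
    let ?ht = "\<lambda>w. (1 / 2) *\<^sub>R lie_deriv_endo xi (\<lambda>q w. (1 / sqrt (1 - \<kappa>)) *\<^sub>R h_tensor xi phi q w) p w"
    have "?ht (?ht v) = ((1 / (2 * s)) * (1 / (2 * s)) * ((2 - \<mu>) * (2 - \<mu>) * (\<kappa> - 1) + (2 * (1 - \<kappa>)) * (2 * (1 - \<kappa>)))) *\<^sub>R phi p (phi p v)"
    proof (rule alg2[where e="eta p" and x="xi p" and H="Hf p" and P="phi p" and ht="?ht"
          and a="2 - \<mu>" and b="2 * (1 - \<kappa>)" and c="1 / (2 * s)" and d="\<kappa> - 1"])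
      show "linear (phi p)" by (rule lin_phi[OF p])
      show "linear (Hf p)" by (rule lin_Hf[OF p])
      show "\<And>v. phi p (phi p v) = - v + eta p v *\<^sub>R xi p" by (rule phi2[OF p])
      show "phi p (xi p) = 0" by (rule phi_xi[OF p])
      show "\<And>v. eta p (phi p v) = 0" by (rule eta_phi[OF p])
      show "\<And>v. Hf p (phi p v) = - phi p (Hf p v)" by (rule H_anti[OF p])
      show "\<And>v. eta p (Hf p v) = 0" by (rule eta_H[OF p])
      show "\<And>v. Hf p (Hf p v) = (\<kappa> - 1) *\<^sub>R phi p (phi p v)" using key[OF p] by blast
      show "\<And>w. ?ht w = (1 / (2 * s)) *\<^sub>R ((2 - \<mu>) *\<^sub>R phi p (Hf p w) + (2 * (1 - \<kappa>)) *\<^sub>R phi p w)"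
        using c2[OF p] unfolding s_def by simp
    qed
    also have "\<dots> = ((1 - \<kappa>) - (1 - \<mu> / 2)\<^sup>2) *\<^sub>R phi p (phi p v)"
      using scal[OF k1 s_def] by simp
    finally show ?thesis unfolding Let_def .
  qed
  show ?thesis using k1 c2 c3 by blast
qed

end
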